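(* Consider the following procedure (MPO). Let $\pi^1$ be a reference policy with $\pi^1_h(a|s)\ge\underline{\pi}>0$ for all $h,s,a$, let $T\ge1$ and $\beta=\sqrt{\frac{\log\underline{\pi}^{-1}}{TH^2}}$, and for $t=1,\dots,T$ define $$\pi^{t+1}_h(a|s)\ \propto\ \pi^t_h(a|s)\exp\Big[\beta\,\mathbb{E}_{(S',A')\sim d^{\pi^t}_h(\cdot|s_1(s))}Q^{\pi^t,\pi^t}_h(s,a,S',A')\Big].$$ Then there exists a policy $\bar\pi^T$ such that $d^{\bar\pi^T}_h=\frac1T\sum_{t=1}^Td^{\pi^t}_h$ for all $h\in[H]$, and for $T=\frac{16H^4\log\underline{\pi}^{-1}}{\epsilon^2}$ the pair $(\bar\pi^T,\bar\pi^T)$ is an $\epsilon$-approximate Nash equilibrium. Hence this procedure outputs an $\epsilon$-approximate Nash equilibrium after $\frac{16H^4\log\underline{\pi}^{-1}}{\epsilon^2}$ policy updates.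
   Context: Finite-horizon MDP: state space $\mathcal{S}$, action space $\mathcal{A}$, horizon $H$, transition kernel $f$, initial distribution $\nu_1$. Each state $s$ is reachable from a unique initial state, denoted $s_1(s)$. Policies are non-stationary, $\pi=(\pi_h)_{h=1}^H$, $\Pi$ is the set of policies. Pairwise reward $r(s,a,s',a')=\mathbb{P}([s,a]\succ[s',a'])\in[0,1]$ with $r(s,a,s',a')=1-r(s',a',s,a)$. For policies $\pi,\pi'$, trajectories are generated independently from a common initial state $S_1=S'_1\sim\nu_1$: $A_\tau\sim\pi_\tau(\cdot|S_\tau)$, $S_{\tau+1}\sim f(\cdot|S_\tau,A_\tau)$, and similarly for $(S',A')$ under $\pi'$. Define $Q^{\pi,\pi'}_h(s,a,s',a')=\mathbb{E}\big[\sum_{\tau=h}^Hr(S_\tau,A_\tau,S'_\tau,A'_\tau)\mid S_h=s,S'_h=s',A_h=a,A'_h=a'\big]$, $V^{\pi,\pi'}(s,s')=\mathbb{E}\big[\sum_{\tau=1}^Hr(S_\tau,A_\tau,S'_\tau,A'_\tau)\mid S_1=s,S'_1=s'\big]$, and $\langle\nu_1,V^{\pi,\pi'}\rangle=\mathbb{E}_{S_1\sim\nu_1}V^{\pi,\pi'}(S_1,S_1)$. Occupancy measures: $d^\pi_h(s,a)=\Pr(S_h=s,A_h=a)$ and $d^\pi_h(s,a|s_1)=\Pr(S_h=s,A_h=a\mid S_1=s_1)$. A pair $(\pi,\pi)$ is an $\epsilon$-approximate Nash equilibrium if $\langle\nu_1,V^{\pi,\pi}\rangle-\min_{\bar\pi\in\Pi}\langle\nu_1,V^{\pi,\bar\pi}\rangle\le\epsilon$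 and $\max_{\bar\pi\in\Pi}\langle\nu_1,V^{\bar\pi,\pi}\rangle-\langle\nu_1,V^{\pi,\pi}\rangle\le\epsilon$. *)

theory Defs
  imports Complex_Main
begin

text \<open>Transition kernel f s a s' = P(S_{h+1} = s' | S_h = s, A_h = a) (stationary),
  initial distribution nu1, pairwise reward r.  Steps are indexed h = 1..H.
  A (non-stationary) policy pi gives pi h s a = pi_h(a|s).\<close>

type_synonym ('s, 'a) policy = "nat \<Rightarrow> 's \<Rightarrow> 'a \<Rightarrow> real"

definition is_dist :: "('x::finite \<Rightarrow> real) \<Rightarrow> bool" where
  "is_dist p \<longleftrightarrow> (\<forall>x. 0 \<le> p x) \<and> sum p UNIV = 1"

definition policies :: "nat \<Rightarrow> ('s::finite, 'a::finite) policy set" where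
  "policies H = {\<pi>. \<forall>h\<in>{1..H}. \<forall>s. is_dist (\<pi> h s)}"

fun reach :: "('s \<Rightarrow> 'a \<Rightarrow> 's \<Rightarrow> real) \<Rightarrow> 's \<Rightarrow> nat \<Rightarrow> 's set" where
  "reach f s0 0 = {}"
| "reach f s0 (Suc 0) = {s0}"
| "reach f s0 (Suc (Suc h)) = {s'. \<exists>s\<in>reach f s0 (Suc h). \<exists>a. f s a s' > 0}"

fun sdist :: "('s::finite \<Rightarrow> 'a::finite \<Rightarrow> 's \<Rightarrow> real) \<Rightarrow> ('s, 'a) policy \<Rightarrow> 's \<Rightarrow> nat \<Rightarrow> 's \<Rightarrow> real" where
  "sdist f \<pi> s0 0 s = 0"
| "sdist f \<pi> s0 (Suc 0) s = (if s = s0 then 1 else 0)"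
| "sdist f \<pi> s0 (Suc (Suc h)) s' =
     (\<Sum>s\<in>UNIV. \<Sum>a\<in>UNIV. sdist f \<pi> s0 (Suc h) s * \<pi> (Suc h) s a * f s a s')"

definition occ_cond :: "('s::finite \<Rightarrow> 'a::finite \<Rightarrow> 's \<Rightarrow> real) \<Rightarrow> ('s, 'a) policy \<Rightarrow> nat \<Rightarrow> 's \<Rightarrow> 's \<Rightarrow> 'a \<Rightarrow> real" where
  "occ_cond f \<pi> h s0 s a = sdist f \<pi> s0 h s * \<pi> h s a"

definition occ :: "('s::finite \<Rightarrow> 'a::finite \<Rightarrow> 's \<Rightarrow> real) \<Rightarrow> ('s \<Rightarrow> real) \<Rightarrow> ('s, 'a) policy \<Rightarrow> nat \<Rightarrow> 's \<Rightarrow> 'a \<Rightarrow> real" where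
  "occ f \<nu>1 \<pi> h s a = (\<Sum>s0\<in>UNIV. \<nu>1 s0 * occ_cond f \<pi> h s0 s a)"

text \<open>QQ n h s a s' a': expected sum of pairwise rewards over steps h..h+n,
  given S_h = s, A_h = a, S'_h = s', A'_h = a' (independent trajectories).\<close>
fun QQ :: "('s::finite \<Rightarrow> 'a::finite \<Rightarrow> 's \<Rightarrow> real) \<Rightarrow> ('s \<Rightarrow> 'a \<Rightarrow> 's \<Rightarrow> 'a \<Rightarrow> real)
           \<Rightarrow> ('s, 'a) policy \<Rightarrow> ('s, 'a) policy \<Rightarrow> nat \<Rightarrow> nat \<Rightarrow> 's \<Rightarrow> 'a \<Rightarrow> 's \<Rightarrow> 'a \<Rightarrow> real" where
  "QQ f r \<pi> \<pi>' 0 h s a s' a' = r s a s' a'"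
| "QQ f r \<pi> \<pi>' (Suc n) h s a s' a' = r s a s' a' +
     (\<Sum>x\<in>UNIV. \<Sum>x'\<in>UNIV. f s a x * f s' a' x' *
        (\<Sum>b\<in>UNIV. \<Sum>b'\<in>UNIV. \<pi> (Suc h) x b * \<pi>' (Suc h) x' b' * QQ f r \<pi> \<pi>' n (Suc h) x b x' b'))"

definition Qfun where
  "Qfun f r H \<pi> \<pi>' h = QQ f r \<pi> \<pi>' (H - h) h"

definition Vfun where
  "Vfun f r H \<pi> \<pi>' s s' = (\<Sum>a\<in>UNIV. \<Sum>a'\<in>UNIV. \<pi> 1 s a * \<pi>' 1 s' a' * Qfun f r H \<pi> \<pi>' 1 s a s' a')"

definition val where
  "val f r \<nu>1 H \<pi> \<pi>' = (\<Sum>s\<in>UNIV. \<nu>1 s * Vfun f r H \<pi> \<pi>' s s)"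

definition approx_NE where
  "approx_NE f r \<nu>1 H \<epsilon> \<pi> \<longleftrightarrow>
     val f r \<nu>1 H \<pi> \<pi> - (INF \<sigma>\<in>policies H. val f r \<nu>1 H \<pi> \<sigma>) \<le> \<epsilon> \<and>
     (SUP \<sigma>\<in>policies H. val f r \<nu>1 H \<sigma> \<pi>) - val f r \<nu>1 H \<pi> \<pi> \<le> \<epsilon>"

text \<open>One MPO update with step size beta; s1 maps a state to its initial state.\<close>
definition mpo_update where
  "mpo_update f r H s1 \<beta> \<pi> =
     (let G = (\<lambda>h s a. \<Sum>s'\<in>UNIV. \<Sum>a'\<in>UNIV. occ_cond f \<pi> h (s1 s) s' a' * Qfun f r H \<pi> \<pi> h s a s' a')
      in (\<lambda>h s a. \<pi> h s a * exp (\<beta> * G h s a) / (\<Sum>b\<in>UNIV. \<pi> h s b * exp (\<beta> * G h s b))))"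

end

theory Submission
  imports Defs
begin

lemma pol_nonneg: "\<pi> \<in> policies H \<Longrightarrow> 1 \<le> h \<Longrightarrow> h \<le> H \<Longrightarrow> 0 \<le> \<pi> h s a"
  by (auto simp: policies_def is_dist_def)

lemma pol_sum: "\<pi> \<in> policies H \<Longrightarrow> 1 \<le> h \<Longrightarrow> h \<le> H \<Longrightarrow> (\<Sum>a\<in>UNIV. \<pi> h s a) = 1"
  by (auto simp: policies_def is_dist_def)

lemma nat_induct12:
  assumes "P 0" "P (Suc 0)" "\<And>h. P (Suc h) \<Longrightarrow> P (Suc (Suc h))"
  shows "P n"
proof (induction n rule: less_induct)
  case (less n)
  then show ?case using assms by (cases n; cases "n - 1") auto
qed

lemma sdist_nonneg:
  assumes fn: "\<And>s a s'. 0 \<le> f s a s'" and pol: "\<pi> \<in> policies H"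
  shows "h \<le> Suc H \<Longrightarrow> 0 \<le> sdist f \<pi> s0 h s"
proof (induction h arbitrary: s rule: nat_induct12)
  case (3 h)
  then show ?case using fn pol pol_nonneg[OF pol]
    by (auto intro!: sum_nonneg mult_nonneg_nonneg)
qed auto

lemma sdist_sum:
  assumes fd: "\<And>s a. (\<Sum>s'\<in>UNIV. f s a s') = 1" and pol: "\<pi> \<in> policies H"
  shows "1 \<le> h \<Longrightarrow> h \<le> Suc H \<Longrightarrow> (\<Sum>s\<in>UNIV. sdist f \<pi> s0 h s) = 1"
proof (induction h rule: nat_induct12)
  case 2
  then show ?case by simp
next
  case (3 h)
  have "(\<Sum>s'\<in>UNIV. sdist f \<pi> s0 (Suc (Suc h)) s')
     = (\<Sum>s'\<in>UNIV. \<Sum>s\<in>UNIV. \<Sum>a\<in>UNIV. sdist f \<pi> s0 (Suc h) s * \<pi> (Suc h) s a * f s a s')"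
    by simp
  also have "\<dots> = (\<Sum>s\<in>UNIV. \<Sum>a\<in>UNIV. \<Sum>s'\<in>UNIV. sdist f \<pi> s0 (Suc h) s * \<pi> (Suc h) s a * f s a s')"
    by (subst sum.swap, rule sum.cong[OF refl], rule sum.swap)
  also have "\<dots> = (\<Sum>s\<in>UNIV. \<Sum>a\<in>UNIV. sdist f \<pi> s0 (Suc h) s * \<pi> (Suc h) s a)"
    by (simp add: sum_distrib_left[symmetric] fd)
  also have "\<dots> = (\<Sum>s\<in>UNIV. sdist f \<pi> s0 (Suc h) s)"
    using pol_sum[OF pol, of "Suc h"] 3(3) by (simp add: sum_distrib_left[symmetric])
  also have "\<dots> = 1" using 3 by (cases h) auto
  finally show ?case .
qed auto

lemma sdist_reach:
  assumes fn: "\<And>s a s'. 0 \<le> f s a s'"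
  shows "sdist f \<pi> s0 h s \<noteq> 0 \<Longrightarrow> s \<in> reach f s0 h"
proof (induction h arbitrary: s rule: nat_induct12)
  case 1
  then show ?case by simp
next
  case 2
  then show ?case by (simp split: if_splits)
next
  case (3 h s')
  have "(\<Sum>s\<in>UNIV. \<Sum>a\<in>UNIV. sdist f \<pi> s0 (Suc h) s * \<pi> (Suc h) s a * f s a s') \<noteq> 0"
    using 3(2) by simp
  then obtain s where "(\<Sum>a\<in>UNIV. sdist f \<pi> s0 (Suc h) s * \<pi> (Suc h) s a * f s a s') \<noteq> 0"
    using sum.not_neutral_contains_not_neutral by blast
  then obtain a where "sdist f \<pi> s0 (Suc h) s * \<pi> (Suc h) s a * f s a s' \<noteq> 0"
    using sum.not_neutral_contains_not_neutral by blast
  then have "sdist f \<pi> s0 (Suc h) s \<noteq> 0" "f s a s' \<noteq> 0" by auto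
  moreover have "0 \<le> f s a s'" using fn by simp
  ultimately have "s \<in> reach f s0 (Suc h)" "f s a s' > 0" using 3(1) by auto
  then show ?case by auto
qed

lemma sdist_cong:
  "(\<And>i. 0 < i \<Longrightarrow> i < h \<Longrightarrow> \<pi> i = \<pi>' i) \<Longrightarrow> sdist f \<pi> s0 h s = sdist f \<pi>' s0 h s"
proof (induction h arbitrary: s rule: nat_induct12)
  case (3 h s')
  then show ?case by simp
qed auto

lemma QQ_cong:
  "(\<And>i. h < i \<Longrightarrow> i \<le> h + n \<Longrightarrow> \<pi> i = \<pi>' i) \<Longrightarrow> QQ f r \<pi> \<sigma> n h s a s' a' = QQ f r \<pi>' \<sigma> n h s a s' a'"
proof (induction n arbitrary: h s a s' a')
  case 0
  then show ?case by simp
next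
  case (Suc n)
  have e: "\<pi> (Suc h) = \<pi>' (Suc h)" using Suc.prems by simp
  have "QQ f r \<pi> \<sigma> n (Suc h) x b x' b' = QQ f r \<pi>' \<sigma> n (Suc h) x b x' b'" for x b x' b'
    using Suc.prems by (intro Suc.IH) auto
  then show ?case using e by (simp only: QQ.simps)
qed

lemma dist_prod_sum:
  fixes p :: "'x::finite \<Rightarrow> real" and q :: "'y::finite \<Rightarrow> real"
  shows "(\<Sum>x\<in>UNIV. \<Sum>y\<in>UNIV. p x * q y * c) = (\<Sum>x\<in>UNIV. p x) * (\<Sum>y\<in>UNIV. q y) * c"
proof -
  have "(\<Sum>x\<in>UNIV. \<Sum>y\<in>UNIV. p x * q y * c) = (\<Sum>x\<in>UNIV. p x * (\<Sum>y\<in>UNIV. q y * c))"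
    by (simp add: sum_distrib_left mult.assoc)
  also have "\<dots> = (\<Sum>x\<in>UNIV. p x) * (\<Sum>y\<in>UNIV. q y * c)"
    by (simp add: sum_distrib_right)
  also have "\<dots> = (\<Sum>x\<in>UNIV. p x) * (\<Sum>y\<in>UNIV. q y) * c"
    by (simp add: sum_distrib_right mult.assoc)
  finally show ?thesis .
qed

lemma QQ_bounds:
  assumes fn: "\<And>s a s'. 0 \<le> f s a s'" and fd: "\<And>s a. (\<Sum>s'\<in>UNIV. f s a s') = 1"
    and pol: "\<pi> \<in> policies H" and pol': "\<sigma> \<in> policies H"
    and rr: "\<And>s a s' a'. 0 \<le> r s a s' a' \<and> r s a s' a' \<le> 1"
  shows "h + n \<le> H \<Longrightarrow> 0 \<le> QQ f r \<pi> \<sigma> n h s a s' a' \<and> QQ f r \<pi> \<sigma> n h s a s' a' \<le> real n + 1"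
proof (induction n arbitrary: h s a s' a')
  case 0
  then show ?case using rr by simp
next
  case (Suc n)
  let ?I = "\<lambda>x x'. (\<Sum>b\<in>UNIV. \<Sum>b'\<in>UNIV. \<pi> (Suc h) x b * \<sigma> (Suc h) x' b' * QQ f r \<pi> \<sigma> n (Suc h) x b x' b')"
  have IH: "0 \<le> QQ f r \<pi> \<sigma> n (Suc h) x b x' b' \<and> QQ f r \<pi> \<sigma> n (Suc h) x b x' b' \<le> real n + 1" for x b x' b'
    using Suc by auto
  have p1: "0 \<le> \<pi> (Suc h) x b" "0 \<le> \<sigma> (Suc h) x' b'" for x b x' b'
    using pol_nonneg[OF pol, of "Suc h"] pol_nonneg[OF pol', of "Suc h"] Suc.prems by auto
  have I0: "0 \<le> ?I x x'" for x x' using IH p1 by (auto intro!: sum_nonneg)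
  have "?I x x' \<le> (\<Sum>b\<in>UNIV. \<Sum>b'\<in>UNIV. \<pi> (Suc h) x b * \<sigma> (Suc h) x' b' * (real n + 1))" for x x'
    using IH p1 by (intro sum_mono mult_left_mono) (auto)
  also have "\<dots> x x' = real n + 1" for x x'
    using pol_sum[OF pol, of "Suc h"] pol_sum[OF pol', of "Suc h"] Suc.prems
    by (simp add: dist_prod_sum)
  finally have I1: "?I x x' \<le> real n + 1" for x x' .
  let ?J = "(\<Sum>x\<in>UNIV. \<Sum>x'\<in>UNIV. f s a x * f s' a' x' * ?I x x')"
  have J0: "0 \<le> ?J" using I0 fn by (auto intro!: sum_nonneg)
  have "?J \<le> (\<Sum>x\<in>UNIV. \<Sum>x'\<in>UNIV. f s a x * f s' a' x' * (real n + 1))"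
    using I1 fn by (intro sum_mono mult_left_mono) (auto)
  also have "\<dots> = real n + 1" using fd by (simp add: dist_prod_sum)
  finally have J1: "?J \<le> real n + 1" .
  show ?case using J0 J1 rr[of s a s' a'] by simp
qed

lemma G1:
  fixes A :: "'s::finite \<Rightarrow> 'a::finite \<Rightarrow> real" and F :: "'s \<Rightarrow> 'a \<Rightarrow> 'x::finite \<Rightarrow> real"
  shows "(\<Sum>s\<in>UNIV. \<Sum>a\<in>UNIV. A s a * (\<Sum>x\<in>UNIV. F s a x * c x))
       = (\<Sum>x\<in>UNIV. (\<Sum>s\<in>UNIV. \<Sum>a\<in>UNIV. A s a * F s a x) * c x)"
proof -
  have "(\<Sum>s\<in>UNIV. \<Sum>a\<in>UNIV. A s a * (\<Sum>x\<in>UNIV. F s a x * c x))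
      = (\<Sum>s\<in>UNIV. \<Sum>a\<in>UNIV. \<Sum>x\<in>UNIV. A s a * F s a x * c x)"
    by (simp add: sum_distrib_left mult.assoc)
  also have "\<dots> = (\<Sum>s\<in>UNIV. \<Sum>x\<in>UNIV. \<Sum>a\<in>UNIV. A s a * F s a x * c x)"
    by (rule sum.cong[OF refl], rule sum.swap)
  also have "\<dots> = (\<Sum>x\<in>UNIV. \<Sum>s\<in>UNIV. \<Sum>a\<in>UNIV. A s a * F s a x * c x)"
    by (rule sum.swap)
  also have "\<dots> = (\<Sum>x\<in>UNIV. (\<Sum>s\<in>UNIV. \<Sum>a\<in>UNIV. A s a * F s a x) * c x)"
    by (simp add: sum_distrib_right)
  finally show ?thesis .
qed

lemma step_lemma:
  fixes f :: "'s::finite \<Rightarrow> 'a::finite \<Rightarrow> 's \<Rightarrow> real" and \<sigma> \<pi> :: "('s,'a) policy"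
    and m :: nat
  defines "h \<equiv> Suc m"
  shows "(\<Sum>s\<in>UNIV. \<Sum>a\<in>UNIV. \<Sum>s'\<in>UNIV. \<Sum>a'\<in>UNIV. occ_cond f \<sigma> h s0 s a * occ_cond f \<pi> h s0 s' a' * QQ f r \<sigma> \<pi> (Suc n) h s a s' a')
   = (\<Sum>s\<in>UNIV. \<Sum>a\<in>UNIV. \<Sum>s'\<in>UNIV. \<Sum>a'\<in>UNIV. occ_cond f \<sigma> h s0 s a * occ_cond f \<pi> h s0 s' a' * r s a s' a')
   + (\<Sum>x\<in>UNIV. \<Sum>b\<in>UNIV. \<Sum>x'\<in>UNIV. \<Sum>b'\<in>UNIV. occ_cond f \<sigma> (Suc h) s0 x b * occ_cond f \<pi> (Suc h) s0 x' b' * QQ f r \<sigma> \<pi> n (Suc h) x b x' b')"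
proof -
  define C where "C x x' = (\<Sum>b\<in>UNIV. \<Sum>b'\<in>UNIV. \<sigma> (Suc h) x b * \<pi> (Suc h) x' b' * QQ f r \<sigma> \<pi> n (Suc h) x b x' b')" for x x'
  define A where "A s a = occ_cond f \<sigma> h s0 s a" for s a
  define B where "B s a = occ_cond f \<pi> h s0 s a" for s a
  define D where "D s a x' = (\<Sum>x\<in>UNIV. f s a x * C x x')" for s a x'
  define P\<pi> where "P\<pi> x' = (\<Sum>s'\<in>UNIV. \<Sum>a'\<in>UNIV. B s' a' * f s' a' x')" for x'
  define E where "E x = (\<Sum>x'\<in>UNIV. P\<pi> x' * C x x')" for x
  define P\<sigma> where "P\<sigma> x = (\<Sum>s\<in>UNIV. \<Sum>a\<in>UNIV. A s a * f s a x)" for x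
  have Ps: "P\<sigma> x = sdist f \<sigma> s0 (Suc h) x" for x
    by (simp add: P\<sigma>_def A_def occ_cond_def h_def)
  have Pp: "P\<pi> x = sdist f \<pi> s0 (Suc h) x" for x
    by (simp add: P\<pi>_def B_def occ_cond_def h_def)
  have QQs: "QQ f r \<sigma> \<pi> (Suc n) h s a s' a' = r s a s' a' + (\<Sum>x\<in>UNIV. \<Sum>x'\<in>UNIV. f s a x * f s' a' x' * C x x')" for s a s' a'
    by (simp add: C_def)
  have split: "(\<Sum>s\<in>UNIV. \<Sum>a\<in>UNIV. \<Sum>s'\<in>UNIV. \<Sum>a'\<in>UNIV. A s a * B s' a' * QQ f r \<sigma> \<pi> (Suc n) h s a s' a')
    = (\<Sum>s\<in>UNIV. \<Sum>a\<in>UNIV. \<Sum>s'\<in>UNIV. \<Sum>a'\<in>UNIV. A s a * B s' a' * r s a s' a')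
    + (\<Sum>s\<in>UNIV. \<Sum>a\<in>UNIV. \<Sum>s'\<in>UNIV. \<Sum>a'\<in>UNIV. A s a * B s' a' * (\<Sum>x\<in>UNIV. \<Sum>x'\<in>UNIV. f s a x * f s' a' x' * C x x'))"
    unfolding QQs by (simp add: distrib_left sum.distrib)
  have inner: "(\<Sum>x\<in>UNIV. \<Sum>x'\<in>UNIV. f s a x * f s' a' x' * C x x') = (\<Sum>x'\<in>UNIV. f s' a' x' * D s a x')" for s a s' a'
  proof -
    have "(\<Sum>x\<in>UNIV. \<Sum>x'\<in>UNIV. f s a x * f s' a' x' * C x x') = (\<Sum>x'\<in>UNIV. \<Sum>x\<in>UNIV. f s a x * f s' a' x' * C x x')"
      by (rule sum.swap)
    also have "\<dots> = (\<Sum>x'\<in>UNIV. f s' a' x' * D s a x')"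
      by (simp add: D_def sum_distrib_left mult_ac)
    finally show ?thesis .
  qed
  have "(\<Sum>s\<in>UNIV. \<Sum>a\<in>UNIV. \<Sum>s'\<in>UNIV. \<Sum>a'\<in>UNIV. A s a * B s' a' * (\<Sum>x\<in>UNIV. \<Sum>x'\<in>UNIV. f s a x * f s' a' x' * C x x'))
     = (\<Sum>s\<in>UNIV. \<Sum>a\<in>UNIV. A s a * (\<Sum>s'\<in>UNIV. \<Sum>a'\<in>UNIV. B s' a' * (\<Sum>x'\<in>UNIV. f s' a' x' * D s a x')))"
    unfolding inner by (simp add: sum_distrib_left mult.assoc)
  also have "\<dots> = (\<Sum>s\<in>UNIV. \<Sum>a\<in>UNIV. A s a * (\<Sum>x'\<in>UNIV. P\<pi> x' * D s a x'))"
    unfolding P\<pi>_def by (subst G1) (rule refl)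
  also have "\<dots> = (\<Sum>s\<in>UNIV. \<Sum>a\<in>UNIV. A s a * (\<Sum>x\<in>UNIV. f s a x * E x))"
  proof -
    have "(\<Sum>x'\<in>UNIV. P\<pi> x' * D s a x') = (\<Sum>x\<in>UNIV. f s a x * E x)" for s a
    proof -
      have "(\<Sum>x'\<in>UNIV. P\<pi> x' * D s a x') = (\<Sum>x'\<in>UNIV. \<Sum>x\<in>UNIV. P\<pi> x' * f s a x * C x x')"
        by (simp add: D_def sum_distrib_left mult.assoc)
      also have "\<dots> = (\<Sum>x\<in>UNIV. \<Sum>x'\<in>UNIV. P\<pi> x' * f s a x * C x x')"
        by (rule sum.swap)
      also have "\<dots> = (\<Sum>x\<in>UNIV. f s a x * E x)"
        by (simp add: E_def sum_distrib_left mult_ac)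
      finally show ?thesis .
    qed
    then show ?thesis by simp
  qed
  also have "\<dots> = (\<Sum>x\<in>UNIV. P\<sigma> x * E x)"
    unfolding P\<sigma>_def by (rule G1)
  also have "\<dots> = (\<Sum>x\<in>UNIV. \<Sum>b\<in>UNIV. \<Sum>x'\<in>UNIV. \<Sum>b'\<in>UNIV. occ_cond f \<sigma> (Suc h) s0 x b * occ_cond f \<pi> (Suc h) s0 x' b' * QQ f r \<sigma> \<pi> n (Suc h) x b x' b')"
  proof (rule sum.cong[OF refl])
    fix x
    have "P\<sigma> x * E x = (\<Sum>x'\<in>UNIV. \<Sum>b\<in>UNIV. \<Sum>b'\<in>UNIV. occ_cond f \<sigma> (Suc h) s0 x b * occ_cond f \<pi> (Suc h) s0 x' b' * QQ f r \<sigma> \<pi> n (Suc h) x b x' b')"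
      by (simp add: E_def C_def Ps Pp occ_cond_def sum_distrib_left mult_ac)
    also have "\<dots> = (\<Sum>b\<in>UNIV. \<Sum>x'\<in>UNIV. \<Sum>b'\<in>UNIV. occ_cond f \<sigma> (Suc h) s0 x b * occ_cond f \<pi> (Suc h) s0 x' b' * QQ f r \<sigma> \<pi> n (Suc h) x b x' b')"
      by (rule sum.swap)
    finally show "P\<sigma> x * E x = \<dots>" .
  qed
  finally have tail: "(\<Sum>s\<in>UNIV. \<Sum>a\<in>UNIV. \<Sum>s'\<in>UNIV. \<Sum>a'\<in>UNIV. A s a * B s' a' * (\<Sum>x\<in>UNIV. \<Sum>x'\<in>UNIV. f s a x * f s' a' x' * C x x'))
     = (\<Sum>x\<in>UNIV. \<Sum>b\<in>UNIV. \<Sum>x'\<in>UNIV. \<Sum>b'\<in>UNIV. occ_cond f \<sigma> (Suc h) s0 x b * occ_cond f \<pi> (Suc h) s0 x' b' * QQ f r \<sigma> \<pi> n (Suc h) x b x' b')" .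
  show ?thesis using split tail by (simp add: A_def B_def)
qed


definition WS :: "('s::finite \<Rightarrow> 'a::finite \<Rightarrow> 's \<Rightarrow> real) \<Rightarrow> ('s,'a) policy \<Rightarrow> ('s,'a) policy \<Rightarrow> nat \<Rightarrow> 's \<Rightarrow> ('s \<Rightarrow> 'a \<Rightarrow> 's \<Rightarrow> 'a \<Rightarrow> real) \<Rightarrow> real" where
  "WS f \<sigma> \<pi> j s0 g = (\<Sum>s\<in>UNIV. \<Sum>a\<in>UNIV. \<Sum>s'\<in>UNIV. \<Sum>a'\<in>UNIV. occ_cond f \<sigma> j s0 s a * occ_cond f \<pi> j s0 s' a' * g s a s' a')"

lemma WS_1: "WS f \<sigma> \<pi> (Suc 0) s0 g = (\<Sum>a\<in>UNIV. \<Sum>a'\<in>UNIV. \<sigma> (Suc 0) s0 a * \<pi> (Suc 0) s0 a' * g s0 a s0 a')"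
proof -
  have "WS f \<sigma> \<pi> (Suc 0) s0 g = (\<Sum>s\<in>UNIV. if s = s0 then (\<Sum>a\<in>UNIV. \<Sum>s'\<in>UNIV. \<Sum>a'\<in>UNIV. \<sigma> 1 s a * occ_cond f \<pi> 1 s0 s' a' * g s a s' a') else 0)"
    unfolding WS_def by (rule sum.cong[OF refl]) (simp add: occ_cond_def)
  also have "\<dots> = (\<Sum>a\<in>UNIV. \<Sum>s'\<in>UNIV. \<Sum>a'\<in>UNIV. \<sigma> 1 s0 a * occ_cond f \<pi> 1 s0 s' a' * g s0 a s' a')"
    by simp
  also have "\<dots> = (\<Sum>a\<in>UNIV. \<Sum>a'\<in>UNIV. \<sigma> (Suc 0) s0 a * \<pi> (Suc 0) s0 a' * g s0 a s0 a')"
  proof (rule sum.cong[OF refl])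
    fix a
    have "(\<Sum>s'\<in>UNIV. \<Sum>a'\<in>UNIV. \<sigma> 1 s0 a * occ_cond f \<pi> 1 s0 s' a' * g s0 a s' a')
      = (\<Sum>s'\<in>UNIV. if s' = s0 then (\<Sum>a'\<in>UNIV. \<sigma> 1 s0 a * \<pi> 1 s' a' * g s0 a s' a') else 0)"
      by (rule sum.cong[OF refl]) (simp add: occ_cond_def)
    also have "\<dots> = (\<Sum>a'\<in>UNIV. \<sigma> (Suc 0) s0 a * \<pi> (Suc 0) s0 a' * g s0 a s0 a')" by simp
    finally show "(\<Sum>s'\<in>UNIV. \<Sum>a'\<in>UNIV. \<sigma> 1 s0 a * occ_cond f \<pi> 1 s0 s' a' * g s0 a s' a') = \<dots>" .
  qed
  finally show ?thesis .
qed

lemma val_partial: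
  fixes f :: "'s::finite \<Rightarrow> 'a::finite \<Rightarrow> 's \<Rightarrow> real" and \<sigma> \<pi> :: "('s,'a) policy"
  assumes "1 \<le> k" "k \<le> H"
  shows "val f r \<nu>1 H \<sigma> \<pi> = (\<Sum>j=1..<k. \<Sum>s0\<in>UNIV. \<nu>1 s0 * WS f \<sigma> \<pi> j s0 r)
     + (\<Sum>s0\<in>UNIV. \<nu>1 s0 * WS f \<sigma> \<pi> k s0 (QQ f r \<sigma> \<pi> (H - k) k))"
  using assms
proof (induction k rule: nat_induct_at_least)
  case base
  then show ?case by (simp add: val_def Vfun_def Qfun_def WS_1)
next
  case (Suc k)
  obtain m where m: "k = Suc m" using Suc by (cases k) auto
  have Hk': "H - Suc m = Suc (H - Suc (Suc m))" using Suc m by simp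
  have "WS f \<sigma> \<pi> k s0 (QQ f r \<sigma> \<pi> (H - k) k) = WS f \<sigma> \<pi> k s0 r + WS f \<sigma> \<pi> (Suc k) s0 (QQ f r \<sigma> \<pi> (H - Suc k) (Suc k))" for s0
    unfolding WS_def m Hk' by (rule step_lemma)
  then show ?case using Suc by (simp add: distrib_left sum.distrib)
qed

lemma val_R:
  fixes f :: "'s::finite \<Rightarrow> 'a::finite \<Rightarrow> 's \<Rightarrow> real" and \<sigma> \<pi> :: "('s,'a) policy"
  assumes "1 \<le> H"
  shows "val f r \<nu>1 H \<sigma> \<pi> = (\<Sum>j=1..H. \<Sum>s0\<in>UNIV. \<nu>1 s0 * WS f \<sigma> \<pi> j s0 r)"
proof -
  have QQ0: "QQ f r \<sigma> \<pi> 0 H = r" by (intro ext) simp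
  have "val f r \<nu>1 H \<sigma> \<pi> = (\<Sum>j=1..<H. \<Sum>s0\<in>UNIV. \<nu>1 s0 * WS f \<sigma> \<pi> j s0 r)
     + (\<Sum>s0\<in>UNIV. \<nu>1 s0 * WS f \<sigma> \<pi> H s0 r)"
    using val_partial[of H H f r \<nu>1 \<sigma> \<pi>] assms unfolding diff_self_eq_0 QQ0 by simp
  also have "\<dots> = (\<Sum>j=1..H. \<Sum>s0\<in>UNIV. \<nu>1 s0 * WS f \<sigma> \<pi> j s0 r)"
    using assms by (simp add: sum.last_plus atLeastLessThan_nat_numeral)
  finally show ?thesis .
qed

lemma swap22:
  fixes g :: "'s::finite \<Rightarrow> 'a::finite \<Rightarrow> 't::finite \<Rightarrow> 'b::finite \<Rightarrow> real"
  shows "(\<Sum>s\<in>UNIV. \<Sum>a\<in>UNIV. \<Sum>s'\<in>UNIV. \<Sum>a'\<in>UNIV. g s a s' a') = (\<Sum>s'\<in>UNIV. \<Sum>a'\<in>UNIV. \<Sum>s\<in>UNIV. \<Sum>a\<in>UNIV. g s a s' a')"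
proof -
  have "(\<Sum>s\<in>UNIV. \<Sum>a\<in>UNIV. \<Sum>s'\<in>UNIV. \<Sum>a'\<in>UNIV. g s a s' a') = (\<Sum>s\<in>UNIV. \<Sum>s'\<in>UNIV. \<Sum>a\<in>UNIV. \<Sum>a'\<in>UNIV. g s a s' a')"
    by (rule sum.cong[OF refl], rule sum.swap)
  also have "\<dots> = (\<Sum>s'\<in>UNIV. \<Sum>s\<in>UNIV. \<Sum>a\<in>UNIV. \<Sum>a'\<in>UNIV. g s a s' a')"
    by (rule sum.swap)
  also have "\<dots> = (\<Sum>s'\<in>UNIV. \<Sum>s\<in>UNIV. \<Sum>a'\<in>UNIV. \<Sum>a\<in>UNIV. g s a s' a')"
    by (rule sum.cong[OF refl], rule sum.cong[OF refl], rule sum.swap)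
  also have "\<dots> = (\<Sum>s'\<in>UNIV. \<Sum>a'\<in>UNIV. \<Sum>s\<in>UNIV. \<Sum>a\<in>UNIV. g s a s' a')"
    by (rule sum.cong[OF refl], rule sum.swap)
  finally show ?thesis .
qed

lemma swap5:
  fixes g :: "'z::finite \<Rightarrow> 's::finite \<Rightarrow> 'a::finite \<Rightarrow> 't::finite \<Rightarrow> 'b::finite \<Rightarrow> real"
  shows "(\<Sum>z\<in>UNIV. \<Sum>s\<in>UNIV. \<Sum>a\<in>UNIV. \<Sum>s'\<in>UNIV. \<Sum>a'\<in>UNIV. g z s a s' a') = (\<Sum>s\<in>UNIV. \<Sum>a\<in>UNIV. \<Sum>s'\<in>UNIV. \<Sum>a'\<in>UNIV. \<Sum>z\<in>UNIV. g z s a s' a')"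
proof -
  have "(\<Sum>z\<in>UNIV. \<Sum>s\<in>UNIV. \<Sum>a\<in>UNIV. \<Sum>s'\<in>UNIV. \<Sum>a'\<in>UNIV. g z s a s' a') = (\<Sum>s\<in>UNIV. \<Sum>z\<in>UNIV. \<Sum>a\<in>UNIV. \<Sum>s'\<in>UNIV. \<Sum>a'\<in>UNIV. g z s a s' a')"
    by (rule sum.swap)
  also have "\<dots> = (\<Sum>s\<in>UNIV. \<Sum>a\<in>UNIV. \<Sum>z\<in>UNIV. \<Sum>s'\<in>UNIV. \<Sum>a'\<in>UNIV. g z s a s' a')"
    by (rule sum.cong[OF refl], rule sum.swap)
  also have "\<dots> = (\<Sum>s\<in>UNIV. \<Sum>a\<in>UNIV. \<Sum>s'\<in>UNIV. \<Sum>z\<in>UNIV. \<Sum>a'\<in>UNIV. g z s a s' a')"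
    by (rule sum.cong[OF refl], rule sum.cong[OF refl], rule sum.swap)
  also have "\<dots> = (\<Sum>s\<in>UNIV. \<Sum>a\<in>UNIV. \<Sum>s'\<in>UNIV. \<Sum>a'\<in>UNIV. \<Sum>z\<in>UNIV. g z s a s' a')"
    by (rule sum.cong[OF refl], rule sum.cong[OF refl], rule sum.cong[OF refl], rule sum.swap)
  finally show ?thesis .
qed

lemma prod22:
  fixes A :: "'s::finite \<Rightarrow> 'a::finite \<Rightarrow> real" and B :: "'t::finite \<Rightarrow> 'b::finite \<Rightarrow> real"
  shows "(\<Sum>s\<in>UNIV. \<Sum>a\<in>UNIV. \<Sum>s'\<in>UNIV. \<Sum>a'\<in>UNIV. A s a * B s' a') = (\<Sum>s\<in>UNIV. \<Sum>a\<in>UNIV. A s a) * (\<Sum>s'\<in>UNIV. \<Sum>a'\<in>UNIV. B s' a')"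
proof -
  have "(\<Sum>s\<in>UNIV. \<Sum>a\<in>UNIV. A s a) * (\<Sum>s'\<in>UNIV. \<Sum>a'\<in>UNIV. B s' a') = (\<Sum>s\<in>UNIV. \<Sum>a\<in>UNIV. A s a * (\<Sum>s'\<in>UNIV. \<Sum>a'\<in>UNIV. B s' a'))"
    by (simp add: sum_distrib_right)
  also have "\<dots> = (\<Sum>s\<in>UNIV. \<Sum>a\<in>UNIV. \<Sum>s'\<in>UNIV. \<Sum>a'\<in>UNIV. A s a * B s' a')"
    by (simp add: sum_distrib_left)
  finally show ?thesis by simp
qed

lemma oc_nonneg:
  assumes fn: "\<And>s a s'. 0 \<le> f s a s'" and pol: "\<pi> \<in> policies H" and j: "1 \<le> j" "j \<le> H"
  shows "0 \<le> occ_cond f \<pi> j s0 s a"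
  unfolding occ_cond_def using sdist_nonneg[OF fn pol, of j] pol_nonneg[OF pol] j by simp

lemma oc_sum:
  assumes fd: "\<And>s a. (\<Sum>s'\<in>UNIV. f s a s') = 1" and pol: "\<pi> \<in> policies H" and j: "1 \<le> j" "j \<le> H"
  shows "(\<Sum>s\<in>UNIV. \<Sum>a\<in>UNIV. occ_cond f \<pi> j s0 s a) = 1"
proof -
  have "(\<Sum>s\<in>UNIV. \<Sum>a\<in>UNIV. occ_cond f \<pi> j s0 s a) = (\<Sum>s\<in>UNIV. sdist f \<pi> s0 j s)"
    using pol_sum[OF pol] j by (simp add: occ_cond_def sum_distrib_left[symmetric])
  also have "\<dots> = 1" using sdist_sum[OF fd pol, of j] j by simp
  finally show ?thesis .
qed

lemma WS_add: "WS f \<sigma> \<pi> j s0 g + WS f \<sigma> \<pi> j s0 g' = WS f \<sigma> \<pi> j s0 (\<lambda>s a s' a'. g s a s' a' + g' s a s' a')"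
  unfolding WS_def by (simp add: sum.distrib distrib_left)

lemma WS_swap: "WS f \<pi> \<sigma> j s0 g = WS f \<sigma> \<pi> j s0 (\<lambda>s a s' a'. g s' a' s a)"
  unfolding WS_def by (subst swap22) (intro sum.cong refl, simp only: mult.commute)

lemma WS_anti:
  assumes fd: "\<And>s a. (\<Sum>s'\<in>UNIV. f s a s') = 1" and pol: "\<pi> \<in> policies H" "\<sigma> \<in> policies H"
    and j: "1 \<le> j" "j \<le> H" and anti: "\<And>s a s' a'. r s a s' a' = 1 - r s' a' s a"
  shows "WS f \<sigma> \<pi> j s0 r + WS f \<pi> \<sigma> j s0 r = 1"
proof -
  have rr: "(\<lambda>s a s' a'. r s a s' a' + r s' a' s a) = (\<lambda>s a s' a'. 1)"
    using anti by (intro ext) (metis add_diff_cancel_left' diff_add_cancel)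
  have "WS f \<sigma> \<pi> j s0 r + WS f \<pi> \<sigma> j s0 r = WS f \<sigma> \<pi> j s0 (\<lambda>s a s' a'. 1)"
    unfolding WS_swap[of f \<pi> \<sigma>] WS_add rr ..
  also have "\<dots> = (\<Sum>s\<in>UNIV. \<Sum>a\<in>UNIV. occ_cond f \<sigma> j s0 s a) * (\<Sum>s'\<in>UNIV. \<Sum>a'\<in>UNIV. occ_cond f \<pi> j s0 s' a')"
    unfolding WS_def prod22[symmetric] by simp
  also have "\<dots> = 1" using oc_sum[OF fd pol(1) j] oc_sum[OF fd pol(2) j] by simp
  finally show ?thesis .
qed

lemma val_anti:
  assumes fd: "\<And>s a. (\<Sum>s'\<in>UNIV. f s a s') = 1" and pol: "\<pi> \<in> policies H" "\<sigma> \<in> policies H"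
    and H: "1 \<le> H" and anti: "\<And>s a s' a'. r s a s' a' = 1 - r s' a' s a"
    and nu: "(\<Sum>s\<in>UNIV. \<nu>1 s) = 1"
  shows "val f r \<nu>1 H \<sigma> \<pi> + val f r \<nu>1 H \<pi> \<sigma> = real H"
proof -
  have "val f r \<nu>1 H \<sigma> \<pi> + val f r \<nu>1 H \<pi> \<sigma> = (\<Sum>j=1..H. \<Sum>s0\<in>UNIV. \<nu>1 s0 * (WS f \<sigma> \<pi> j s0 r + WS f \<pi> \<sigma> j s0 r))"
    unfolding val_R[OF H] by (simp add: sum.distrib distrib_left)
  also have "\<dots> = (\<Sum>j=1..H. \<Sum>s0\<in>UNIV. \<nu>1 s0)"
    using WS_anti[OF fd pol _ _ anti] by (intro sum.cong refl) auto
  also have "\<dots> = real H" using nu by simp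
  finally show ?thesis .
qed

lemma supp:
  fixes f :: "'s::finite \<Rightarrow> 'a::finite \<Rightarrow> 's \<Rightarrow> real" and \<nu>1 :: "'s \<Rightarrow> real" and s1 :: "'s \<Rightarrow> 's"
    and \<pi> \<sigma> :: "('s,'a) policy" and j H :: nat
  assumes fn: "\<And>s a s'. 0 \<le> f s a s'" and nun: "\<And>s. 0 \<le> \<nu>1 s"
    and ru: "\<forall>s0 s. \<forall>h\<in>{1..H}. \<nu>1 s0 > 0 \<longrightarrow> s \<in> reach f s0 h \<longrightarrow> s1 s = s0"
    and j: "1 \<le> j" "j \<le> H"
  shows "\<nu>1 s0 * sdist f \<pi> s0 j s' * X = (if s1 s' = s0 then \<nu>1 s0 * sdist f \<pi> s0 j s' * X else 0)"
proof -
  have *: "s1 s' = s0" if "\<nu>1 s0 * sdist f \<pi> s0 j s' * X \<noteq> 0"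
  proof -
    have "\<nu>1 s0 > 0" using that nun[of s0] by (auto simp: order_le_less)
    moreover have "s' \<in> reach f s0 j" using that sdist_reach[OF fn] by auto
    moreover have "j \<in> {1..H}" using j by simp
    ultimately show ?thesis using ru by blast
  qed
  show ?thesis
  proof (cases "s1 s' = s0")
    case True
    then show ?thesis by simp
  next
    case False
    then have "\<nu>1 s0 * sdist f \<pi> s0 j s' * X = 0" using * by blast
    then show ?thesis using False by simp
  qed
qed

lemma supp_occ:
  fixes f :: "'s::finite \<Rightarrow> 'a::finite \<Rightarrow> 's \<Rightarrow> real" and \<nu>1 :: "'s \<Rightarrow> real" and s1 :: "'s \<Rightarrow> 's"
    and \<pi> \<sigma> :: "('s,'a) policy" and j H :: nat
  assumes fn: "\<And>s a s'. 0 \<le> f s a s'" and nun: "\<And>s. 0 \<le> \<nu>1 s"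
    and ru: "\<forall>s0 s. \<forall>h\<in>{1..H}. \<nu>1 s0 > 0 \<longrightarrow> s \<in> reach f s0 h \<longrightarrow> s1 s = s0"
    and j: "1 \<le> j" "j \<le> H"
  shows "\<nu>1 s0 * occ_cond f \<pi> j s0 s' a' = (if s1 s' = s0 then occ f \<nu>1 \<pi> j s' a' else 0)"
proof -
  have e: "\<nu>1 z * occ_cond f \<pi> j z s' a' = (if s1 s' = z then \<nu>1 z * occ_cond f \<pi> j z s' a' else 0)" for z
    unfolding occ_cond_def mult.assoc[symmetric] by (rule supp[OF fn nun ru j])
  show ?thesis
  proof (cases "s1 s' = s0")
    case True
    have "occ f \<nu>1 \<pi> j s' a' = (\<Sum>z\<in>UNIV. if s1 s' = z then \<nu>1 z * occ_cond f \<pi> j z s' a' else 0)"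
      unfolding occ_def by (intro sum.cong refl) (rule e)
    also have "\<dots> = \<nu>1 s0 * occ_cond f \<pi> j s0 s' a'" using True by simp
    finally show ?thesis using True by simp
  next
    case False
    then show ?thesis by (subst e) simp
  qed
qed

lemma val_occ:
  fixes f :: "'s::finite \<Rightarrow> 'a::finite \<Rightarrow> 's \<Rightarrow> real" and \<nu>1 :: "'s \<Rightarrow> real" and s1 :: "'s \<Rightarrow> 's"
    and \<pi> \<sigma> :: "('s,'a) policy" and j H :: nat
  assumes fn: "\<And>s a s'. 0 \<le> f s a s'" and nun: "\<And>s. 0 \<le> \<nu>1 s"
    and ru: "\<forall>s0 s. \<forall>h\<in>{1..H}. \<nu>1 s0 > 0 \<longrightarrow> s \<in> reach f s0 h \<longrightarrow> s1 s = s0"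
    and H: "1 \<le> H"
  shows "val f r \<nu>1 H \<sigma> \<pi> = (\<Sum>j=1..H. \<Sum>s\<in>UNIV. \<Sum>a\<in>UNIV. \<Sum>s'\<in>UNIV. \<Sum>a'\<in>UNIV.
            occ_cond f \<sigma> j (s1 s') s a * occ f \<nu>1 \<pi> j s' a' * r s a s' a')"
  unfolding val_R[OF H]
proof (rule sum.cong[OF refl])
  fix j assume "j \<in> {1..H}"
  then have j: "1 \<le> j" "j \<le> H" by auto
  have "(\<Sum>s0\<in>UNIV. \<nu>1 s0 * WS f \<sigma> \<pi> j s0 r)
     = (\<Sum>s0\<in>UNIV. \<Sum>s\<in>UNIV. \<Sum>a\<in>UNIV. \<Sum>s'\<in>UNIV. \<Sum>a'\<in>UNIV. occ_cond f \<sigma> j s0 s a * (\<nu>1 s0 * occ_cond f \<pi> j s0 s' a') * r s a s' a')"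
    unfolding WS_def sum_distrib_left by (intro sum.cong refl) (simp only: mult_ac)
  also have "\<dots> = (\<Sum>s0\<in>UNIV. \<Sum>s\<in>UNIV. \<Sum>a\<in>UNIV. \<Sum>s'\<in>UNIV. \<Sum>a'\<in>UNIV. if s0 = s1 s' then occ_cond f \<sigma> j (s1 s') s a * occ f \<nu>1 \<pi> j s' a' * r s a s' a' else 0)"
  proof -
    have e: "occ_cond f \<sigma> j s0 s a * (\<nu>1 s0 * occ_cond f \<pi> j s0 s' a') * r s a s' a'
       = (if s0 = s1 s' then occ_cond f \<sigma> j (s1 s') s a * occ f \<nu>1 \<pi> j s' a' * r s a s' a' else 0)" for s0 s a s' a'
      unfolding supp_occ[OF fn nun ru j] by auto
    show ?thesis by (simp only: e)
  qed
  also have "\<dots> = (\<Sum>s\<in>UNIV. \<Sum>a\<in>UNIV. \<Sum>s'\<in>UNIV. \<Sum>a'\<in>UNIV. \<Sum>s0\<in>UNIV. if s0 = s1 s' then occ_cond f \<sigma> j (s1 s') s a * occ f \<nu>1 \<pi> j s' a' * r s a s' a' else 0)"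
    by (rule swap5)
  also have "\<dots> = (\<Sum>s\<in>UNIV. \<Sum>a\<in>UNIV. \<Sum>s'\<in>UNIV. \<Sum>a'\<in>UNIV. occ_cond f \<sigma> j (s1 s') s a * occ f \<nu>1 \<pi> j s' a' * r s a s' a')"
    by (simp only: sum.delta finite_class.finite_UNIV UNIV_I if_True)
  finally show "(\<Sum>s0\<in>UNIV. \<nu>1 s0 * WS f \<sigma> \<pi> j s0 r) = \<dots>" .
qed

definition mix :: "nat \<Rightarrow> ('s,'a) policy \<Rightarrow> ('s,'a) policy \<Rightarrow> ('s,'a) policy" where
  "mix k \<sigma> \<pi> = (\<lambda>h. if 1 \<le> h \<and> h < k then \<sigma> h else \<pi> h)"

definition Gfun where
  "Gfun f r H s1 \<pi> h s a = (\<Sum>s'\<in>UNIV. \<Sum>a'\<in>UNIV. occ_cond f \<pi> h (s1 s) s' a' * Qfun f r H \<pi> \<pi> h s a s' a')"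

definition mu where
  "mu f \<nu>1 \<sigma> k s = (\<Sum>s0\<in>UNIV. \<nu>1 s0 * sdist f \<sigma> s0 k s)"

lemma mix_pol: "\<sigma> \<in> policies H \<Longrightarrow> \<pi> \<in> policies H \<Longrightarrow> mix k \<sigma> \<pi> \<in> policies H"
  by (auto simp: policies_def mix_def)

lemma mix_1: "mix 1 \<sigma> \<pi> = \<pi>"
  by (auto simp: mix_def)

lemma sdist_mix: "j \<le> k \<Longrightarrow> sdist f (mix k \<sigma> \<pi>) s0 j s = sdist f \<sigma> s0 j s"
  by (rule sdist_cong) (auto simp: mix_def)

lemma QQ_mix: "k \<le> Suc h \<Longrightarrow> QQ f r (mix k \<sigma> \<pi>) \<pi>' n h s a s' a' = QQ f r \<pi> \<pi>' n h s a s' a'"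
  by (rule QQ_cong) (auto simp: mix_def)

lemma oc_mix: "1 \<le> j \<Longrightarrow> j < k \<Longrightarrow> occ_cond f (mix k \<sigma> \<pi>) j s0 s a = occ_cond f \<sigma> j s0 s a"
  by (simp add: occ_cond_def sdist_mix) (simp add: mix_def)

lemma pdl_step:
  fixes f :: "'s::finite \<Rightarrow> 'a::finite \<Rightarrow> 's \<Rightarrow> real" and \<sigma> \<pi> :: "('s,'a) policy"
    and \<nu>1 :: "'s \<Rightarrow> real" and k H :: nat
  assumes k: "1 \<le> k" "k \<le> H"
  shows "val f r \<nu>1 H (mix (Suc k) \<sigma> \<pi>) \<pi> - val f r \<nu>1 H (mix k \<sigma> \<pi>) \<pi>
    = (\<Sum>s0\<in>UNIV. \<nu>1 s0 * (\<Sum>s\<in>UNIV. \<Sum>a\<in>UNIV. \<Sum>s'\<in>UNIV. \<Sum>a'\<in>UNIV.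
        sdist f \<sigma> s0 k s * (\<sigma> k s a - \<pi> k s a) * occ_cond f \<pi> k s0 s' a' * Qfun f r H \<pi> \<pi> k s a s' a'))"
proof -
  have pre: "(\<Sum>j=1..<k. \<Sum>s0\<in>UNIV. \<nu>1 s0 * WS f (mix (Suc k) \<sigma> \<pi>) \<pi> j s0 r)
     = (\<Sum>j=1..<k. \<Sum>s0\<in>UNIV. \<nu>1 s0 * WS f (mix k \<sigma> \<pi>) \<pi> j s0 r)"
    unfolding WS_def by (intro sum.cong refl) (simp add: oc_mix)
  have w1: "WS f (mix (Suc k) \<sigma> \<pi>) \<pi> k s0 (QQ f r (mix (Suc k) \<sigma> \<pi>) \<pi> (H - k) k)
      = (\<Sum>s\<in>UNIV. \<Sum>a\<in>UNIV. \<Sum>s'\<in>UNIV. \<Sum>a'\<in>UNIV. sdist f \<sigma> s0 k s * \<sigma> k s a * occ_cond f \<pi> k s0 s' a' * Qfun f r H \<pi> \<pi> k s a s' a')" for s0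
    unfolding WS_def Qfun_def using k by (simp add: occ_cond_def sdist_mix QQ_mix) (simp add: mix_def)
  have w2: "WS f (mix k \<sigma> \<pi>) \<pi> k s0 (QQ f r (mix k \<sigma> \<pi>) \<pi> (H - k) k)
      = (\<Sum>s\<in>UNIV. \<Sum>a\<in>UNIV. \<Sum>s'\<in>UNIV. \<Sum>a'\<in>UNIV. sdist f \<sigma> s0 k s * \<pi> k s a * occ_cond f \<pi> k s0 s' a' * Qfun f r H \<pi> \<pi> k s a s' a')" for s0
    unfolding WS_def Qfun_def using k by (simp add: occ_cond_def sdist_mix QQ_mix) (simp add: mix_def)
  have "val f r \<nu>1 H (mix (Suc k) \<sigma> \<pi>) \<pi> - val f r \<nu>1 H (mix k \<sigma> \<pi>) \<pi>
     = (\<Sum>s0\<in>UNIV. \<nu>1 s0 * (\<Sum>s\<in>UNIV. \<Sum>a\<in>UNIV. \<Sum>s'\<in>UNIV. \<Sum>a'\<in>UNIV. sdist f \<sigma> s0 k s * \<sigma> k s a * occ_cond f \<pi> k s0 s' a' * Qfun f r H \<pi> \<pi> k s a s' a'))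
     - (\<Sum>s0\<in>UNIV. \<nu>1 s0 * (\<Sum>s\<in>UNIV. \<Sum>a\<in>UNIV. \<Sum>s'\<in>UNIV. \<Sum>a'\<in>UNIV. sdist f \<sigma> s0 k s * \<pi> k s a * occ_cond f \<pi> k s0 s' a' * Qfun f r H \<pi> \<pi> k s a s' a'))"
    unfolding val_partial[OF k, of f r \<nu>1 "mix (Suc k) \<sigma> \<pi>" \<pi>] val_partial[OF k, of f r \<nu>1 "mix k \<sigma> \<pi>" \<pi>] pre w1 w2
    by simp
  also have "\<dots> = (\<Sum>s0\<in>UNIV. \<nu>1 s0 * (\<Sum>s\<in>UNIV. \<Sum>a\<in>UNIV. \<Sum>s'\<in>UNIV. \<Sum>a'\<in>UNIV.
        sdist f \<sigma> s0 k s * (\<sigma> k s a - \<pi> k s a) * occ_cond f \<pi> k s0 s' a' * Qfun f r H \<pi> \<pi> k s a s' a'))"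
    by (simp add: left_diff_distrib right_diff_distrib sum_subtractf)
  finally show ?thesis .
qed


lemma s1_rewrite:
  fixes f :: "'s::finite \<Rightarrow> 'a::finite \<Rightarrow> 's \<Rightarrow> real" and \<nu>1 :: "'s \<Rightarrow> real" and s1 :: "'s \<Rightarrow> 's"
    and \<pi> \<sigma> :: "('s,'a) policy" and k H :: nat
    and d :: "'s \<Rightarrow> 'a \<Rightarrow> real" and Q :: "'s \<Rightarrow> 'a \<Rightarrow> 's \<Rightarrow> 'a \<Rightarrow> real"
  assumes fn: "\<And>s a s'. 0 \<le> f s a s'" and nun: "\<And>s. 0 \<le> \<nu>1 s"
    and ru: "\<forall>s0 s. \<forall>h\<in>{1..H}. \<nu>1 s0 > 0 \<longrightarrow> s \<in> reach f s0 h \<longrightarrow> s1 s = s0"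
    and k: "1 \<le> k" "k \<le> H"
  shows "(\<Sum>s0\<in>UNIV. \<nu>1 s0 * (\<Sum>s\<in>UNIV. \<Sum>a\<in>UNIV. \<Sum>s'\<in>UNIV. \<Sum>a'\<in>UNIV.
            sdist f \<sigma> s0 k s * d s a * occ_cond f \<pi> k s0 s' a' * Q s a s' a'))
    = (\<Sum>s\<in>UNIV. mu f \<nu>1 \<sigma> k s * (\<Sum>a\<in>UNIV. d s a * (\<Sum>s'\<in>UNIV. \<Sum>a'\<in>UNIV. occ_cond f \<pi> k (s1 s) s' a' * Q s a s' a')))"
proof -
  define Y where "Y z s = (\<Sum>a\<in>UNIV. d s a * (\<Sum>s'\<in>UNIV. \<Sum>a'\<in>UNIV. occ_cond f \<pi> k z s' a' * Q s a s' a'))" for z s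
  have 1: "\<nu>1 s0 * (\<Sum>s\<in>UNIV. \<Sum>a\<in>UNIV. \<Sum>s'\<in>UNIV. \<Sum>a'\<in>UNIV.
            sdist f \<sigma> s0 k s * d s a * occ_cond f \<pi> k s0 s' a' * Q s a s' a')
     = (\<Sum>s\<in>UNIV. \<nu>1 s0 * sdist f \<sigma> s0 k s * Y s0 s)" for s0
    unfolding Y_def sum_distrib_left by (intro sum.cong refl) (simp only: mult_ac)
  have 2: "\<nu>1 s0 * sdist f \<sigma> s0 k s * Y s0 s = \<nu>1 s0 * sdist f \<sigma> s0 k s * Y (s1 s) s" for s0 s
  proof (cases "s1 s = s0")
    case True
    then show ?thesis by simp
  next
    case False
    have "\<nu>1 s0 * sdist f \<sigma> s0 k s * Y s0 s = 0" "\<nu>1 s0 * sdist f \<sigma> s0 k s * Y (s1 s) s = 0"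
      by (subst supp[OF fn nun ru k], simp add: False)+
    then show ?thesis by linarith
  qed
  have "(\<Sum>s0\<in>UNIV. \<nu>1 s0 * (\<Sum>s\<in>UNIV. \<Sum>a\<in>UNIV. \<Sum>s'\<in>UNIV. \<Sum>a'\<in>UNIV.
            sdist f \<sigma> s0 k s * d s a * occ_cond f \<pi> k s0 s' a' * Q s a s' a'))
     = (\<Sum>s0\<in>UNIV. \<Sum>s\<in>UNIV. \<nu>1 s0 * sdist f \<sigma> s0 k s * Y (s1 s) s)"
    unfolding 1 2 ..
  also have "\<dots> = (\<Sum>s\<in>UNIV. \<Sum>s0\<in>UNIV. \<nu>1 s0 * sdist f \<sigma> s0 k s * Y (s1 s) s)"
    by (rule sum.swap)
  also have "\<dots> = (\<Sum>s\<in>UNIV. mu f \<nu>1 \<sigma> k s * Y (s1 s) s)"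
    unfolding mu_def sum_distrib_right ..
  finally show ?thesis unfolding Y_def .
qed

lemma pdl:
  fixes f :: "'s::finite \<Rightarrow> 'a::finite \<Rightarrow> 's \<Rightarrow> real" and \<nu>1 :: "'s \<Rightarrow> real" and s1 :: "'s \<Rightarrow> 's"
    and \<pi> \<sigma> :: "('s,'a) policy" and H :: nat
  assumes fn: "\<And>s a s'. 0 \<le> f s a s'" and nun: "\<And>s. 0 \<le> \<nu>1 s"
    and ru: "\<forall>s0 s. \<forall>h\<in>{1..H}. \<nu>1 s0 > 0 \<longrightarrow> s \<in> reach f s0 h \<longrightarrow> s1 s = s0"
    and H: "1 \<le> H"
  shows "val f r \<nu>1 H \<sigma> \<pi> - val f r \<nu>1 H \<pi> \<pi>
    = (\<Sum>k=1..H. \<Sum>s\<in>UNIV. mu f \<nu>1 \<sigma> k s * (\<Sum>a\<in>UNIV. (\<sigma> k s a - \<pi> k s a) * Gfun f r H s1 \<pi> k s a))"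
proof -
  define F where "F k = val f r \<nu>1 H (mix k \<sigma> \<pi>) \<pi>" for k
  have F1: "F 1 = val f r \<nu>1 H \<pi> \<pi>" unfolding F_def mix_1 ..
  have FH: "F (Suc H) = val f r \<nu>1 H \<sigma> \<pi>"
    unfolding F_def val_R[OF H] WS_def by (intro sum.cong refl) (simp add: oc_mix)
  have "val f r \<nu>1 H \<sigma> \<pi> - val f r \<nu>1 H \<pi> \<pi> = (\<Sum>k=1..H. F (Suc k) - F k)"
    using sum_Suc_diff[of 1 H F] H F1 FH by simp
  also have "\<dots> = (\<Sum>k=1..H. \<Sum>s\<in>UNIV. mu f \<nu>1 \<sigma> k s * (\<Sum>a\<in>UNIV. (\<sigma> k s a - \<pi> k s a) * Gfun f r H s1 \<pi> k s a))"
  proof (rule sum.cong[OF refl])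
    fix k assume "k \<in> {1..H}"
    then have k: "1 \<le> k" "k \<le> H" by auto
    show "F (Suc k) - F k = (\<Sum>s\<in>UNIV. mu f \<nu>1 \<sigma> k s * (\<Sum>a\<in>UNIV. (\<sigma> k s a - \<pi> k s a) * Gfun f r H s1 \<pi> k s a))"
      unfolding F_def pdl_step[OF k] s1_rewrite[OF fn nun ru k] Gfun_def ..
  qed
  finally show ?thesis .
qed

lemma upd_dist:
  fixes p q :: "'a::finite \<Rightarrow> real" and w :: "'a \<Rightarrow> real"
  assumes pos: "\<forall>a. p a > 0" and s: "(\<Sum>a\<in>UNIV. p a) = 1"
    and q: "\<forall>a. q a = p a * exp (w a) / (\<Sum>b\<in>UNIV. p b * exp (w b))"
  shows "(\<forall>a. q a > 0) \<and> (\<Sum>a\<in>UNIV. q a) = 1"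
proof -
  have Zp: "(\<Sum>b\<in>UNIV. p b * exp (w b)) > 0"
    using pos by (intro sum_pos) auto
  have "q a > 0" for a using pos Zp q by simp
  moreover have "(\<Sum>a\<in>UNIV. q a) = 1"
    using q Zp by (simp add: sum_divide_distrib[symmetric])
  ultimately show ?thesis by blast
qed

lemma hedge:
  fixes p :: "nat \<Rightarrow> 'a::finite \<Rightarrow> real" and g :: "nat \<Rightarrow> 'a \<Rightarrow> real"
  assumes p1: "\<forall>a. p 1 a \<ge> plow" and plow: "plow > 0" and p1s: "(\<Sum>a\<in>UNIV. p 1 a) = 1"
    and upd: "\<forall>t\<in>{1..T}. \<forall>a. p (Suc t) a = p t a * exp (\<beta> * g t a) / (\<Sum>b\<in>UNIV. p t b * exp (\<beta> * g t b))"
    and gb: "\<forall>t\<in>{1..T}. \<forall>a. 0 \<le> g t a \<and> g t a \<le> M"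
    and beta: "\<beta> > 0" "\<beta> * M \<le> 1"
  shows "(\<Sum>t=1..T. g t a0 - (\<Sum>b\<in>UNIV. p t b * g t b)) \<le> ln (1 / plow) / \<beta> + \<beta> * real T * M\<^sup>2"
proof -
  define Z where "Z t = (\<Sum>b\<in>UNIV. p t b * exp (\<beta> * g t b))" for t
  have inv: "(\<forall>a. p t a > 0) \<and> (\<Sum>a\<in>UNIV. p t a) = 1" if "1 \<le> t" "t \<le> Suc T" for t
    using that
  proof (induction t rule: nat_induct_at_least)
    case base
    then show ?case using p1 plow p1s by (auto intro: less_le_trans)
  next
    case (Suc t)
    then have IH: "(\<forall>a. p t a > 0) \<and> (\<Sum>a\<in>UNIV. p t a) = 1" by simp
    have "t \<in> {1..T}" using Suc by simp
    then show ?case using upd_dist[of "p t" "p (Suc t)" "\<lambda>a. \<beta> * g t a"] IH upd by blast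
  qed
  have Zpos: "Z t > 0" if "t \<in> {1..T}" for t
    using inv[of t] that unfolding Z_def by (intro sum_pos) auto
  have lnstep: "ln (p (Suc t) a0) = ln (p t a0) + \<beta> * g t a0 - ln (Z t)" if "t \<in> {1..T}" for t
  proof -
    have pt: "p t a0 > 0" using inv[of t] that by auto
    have "p (Suc t) a0 = p t a0 * exp (\<beta> * g t a0) / Z t" using upd that by (simp add: Z_def)
    then show ?thesis using pt Zpos[OF that] by (simp add: ln_div ln_mult)
  qed
  have lnZ: "ln (Z t) \<le> \<beta> * (\<Sum>b\<in>UNIV. p t b * g t b) + \<beta>\<^sup>2 * M\<^sup>2" if "t \<in> {1..T}" for t
  proof -
    have pt: "\<forall>a. p t a > 0" "(\<Sum>a\<in>UNIV. p t a) = 1" using inv[of t] that by auto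
    have e: "exp (\<beta> * g t b) \<le> 1 + \<beta> * g t b + \<beta>\<^sup>2 * M\<^sup>2" for b
    proof -
      have g0: "0 \<le> g t b" "g t b \<le> M" using gb that by auto
      have x0: "0 \<le> \<beta> * g t b" using g0 beta by simp
      have x1: "\<beta> * g t b \<le> \<beta> * M" using g0 beta by (simp add: mult_left_mono)
      have "exp (\<beta> * g t b) \<le> 1 + \<beta> * g t b + (\<beta> * g t b)\<^sup>2"
        using exp_bound[OF x0] x1 beta by simp
      also have "(\<beta> * g t b)\<^sup>2 \<le> (\<beta> * M)\<^sup>2" using x0 x1 by (simp add: power_mono)
      finally show ?thesis by (simp add: power_mult_distrib)
    qed
    have "Z t \<le> (\<Sum>b\<in>UNIV. p t b * (1 + \<beta> * g t b + \<beta>\<^sup>2 * M\<^sup>2))"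
      unfolding Z_def using pt e by (intro sum_mono mult_left_mono) (auto intro: less_imp_le)
    also have "\<dots> = (\<Sum>b\<in>UNIV. p t b) + \<beta> * (\<Sum>b\<in>UNIV. p t b * g t b) + (\<Sum>b\<in>UNIV. p t b) * \<beta>\<^sup>2 * M\<^sup>2"
      by (simp add: distrib_left sum.distrib sum_distrib_left sum_distrib_right mult_ac)
    also have "\<dots> = 1 + \<beta> * (\<Sum>b\<in>UNIV. p t b * g t b) + \<beta>\<^sup>2 * M\<^sup>2" using pt by simp
    finally have "Z t \<le> 1 + \<beta> * (\<Sum>b\<in>UNIV. p t b * g t b) + \<beta>\<^sup>2 * M\<^sup>2" .
    moreover have "ln (Z t) \<le> Z t - 1" using ln_le_minus_one[OF Zpos[OF that]] .
    ultimately show ?thesis by linarith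
  qed
  have tel: "(\<Sum>t=1..T. ln (p (Suc t) a0) - ln (p t a0)) = ln (p (Suc T) a0) - ln (p 1 a0)"
    by (rule sum_Suc_diff) simp
  have "(\<Sum>t=1..T. ln (p (Suc t) a0) - ln (p t a0)) = (\<Sum>t=1..T. \<beta> * g t a0 - ln (Z t))"
    using lnstep by (intro sum.cong refl) auto
  also have "\<dots> \<ge> (\<Sum>t=1..T. \<beta> * (g t a0 - (\<Sum>b\<in>UNIV. p t b * g t b)) - \<beta>\<^sup>2 * M\<^sup>2)"
    using lnZ by (intro sum_mono) (auto simp: algebra_simps)
  finally have A: "(\<Sum>t=1..T. \<beta> * (g t a0 - (\<Sum>b\<in>UNIV. p t b * g t b)) - \<beta>\<^sup>2 * M\<^sup>2) \<le> ln (p (Suc T) a0) - ln (p 1 a0)"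
    using tel by simp
  have "(\<Sum>t=1..T. \<beta> * (g t a0 - (\<Sum>b\<in>UNIV. p t b * g t b)) - \<beta>\<^sup>2 * M\<^sup>2)
      = \<beta> * (\<Sum>t=1..T. g t a0 - (\<Sum>b\<in>UNIV. p t b * g t b)) - real T * \<beta>\<^sup>2 * M\<^sup>2"
    by (simp add: sum_subtractf sum_distrib_left right_diff_distrib)
  moreover have "ln (p (Suc T) a0) \<le> 0"
  proof -
    have "p (Suc T) a0 > 0" "(\<Sum>a\<in>UNIV. p (Suc T) a) = 1" using inv[of "Suc T"] by auto
    moreover have "p (Suc T) a0 \<le> (\<Sum>a\<in>UNIV. p (Suc T) a)"
      using inv[of "Suc T"] by (intro member_le_sum) (auto intro: less_imp_le)
    ultimately show ?thesis by simp
  qed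
  moreover have "ln (p 1 a0) \<ge> ln plow" using p1 plow by (simp add: ln_le_cancel_iff less_le_trans[OF plow])
  moreover have "ln (1 / plow) = - ln plow" using plow by (simp add: ln_div)
  ultimately have B: "\<beta> * (\<Sum>t=1..T. g t a0 - (\<Sum>b\<in>UNIV. p t b * g t b)) \<le> ln (1 / plow) + real T * \<beta>\<^sup>2 * M\<^sup>2"
    using A by linarith
  have "(\<Sum>t=1..T. g t a0 - (\<Sum>b\<in>UNIV. p t b * g t b)) \<le> (ln (1 / plow) + real T * \<beta>\<^sup>2 * M\<^sup>2) / \<beta>"
    using B beta by (simp add: pos_le_divide_eq mult.commute)
  also have "\<dots> = ln (1 / plow) / \<beta> + \<beta> * real T * M\<^sup>2"
    using beta by (simp add: add_divide_distrib power2_eq_square)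
  finally show ?thesis .
qed

lemma mu_1: "mu f \<nu>1 \<pi> (Suc 0) s = \<nu>1 s"
  by (simp add: mu_def if_distrib cong: if_cong)

lemma mu_rec:
  fixes f :: "'s::finite \<Rightarrow> 'a::finite \<Rightarrow> 's \<Rightarrow> real"
  shows "mu f \<nu>1 \<pi> (Suc (Suc h)) s' = (\<Sum>s\<in>UNIV. \<Sum>a\<in>UNIV. mu f \<nu>1 \<pi> (Suc h) s * \<pi> (Suc h) s a * f s a s')"
proof -
  have "mu f \<nu>1 \<pi> (Suc (Suc h)) s' = (\<Sum>s0\<in>UNIV. \<Sum>s\<in>UNIV. \<Sum>a\<in>UNIV. \<nu>1 s0 * sdist f \<pi> s0 (Suc h) s * \<pi> (Suc h) s a * f s a s')"
    unfolding mu_def sdist.simps sum_distrib_left by (simp only: mult.assoc)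
  also have "\<dots> = (\<Sum>s\<in>UNIV. \<Sum>s0\<in>UNIV. \<Sum>a\<in>UNIV. \<nu>1 s0 * sdist f \<pi> s0 (Suc h) s * \<pi> (Suc h) s a * f s a s')"
    by (rule sum.swap)
  also have "\<dots> = (\<Sum>s\<in>UNIV. \<Sum>a\<in>UNIV. \<Sum>s0\<in>UNIV. \<nu>1 s0 * sdist f \<pi> s0 (Suc h) s * \<pi> (Suc h) s a * f s a s')"
    by (rule sum.cong[OF refl], rule sum.swap)
  also have "\<dots> = (\<Sum>s\<in>UNIV. \<Sum>a\<in>UNIV. mu f \<nu>1 \<pi> (Suc h) s * \<pi> (Suc h) s a * f s a s')"
    unfolding mu_def sum_distrib_right ..
  finally show ?thesis .
qed

lemma mu_nonneg:
  assumes fn: "\<And>s a s'. 0 \<le> f s a s'" and nun: "\<And>s. 0 \<le> \<nu>1 s" and pol: "\<pi> \<in> policies H" and k: "k \<le> Suc H"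
  shows "0 \<le> mu f \<nu>1 \<pi> k s"
  unfolding mu_def using sdist_nonneg[OF fn pol k] nun by (intro sum_nonneg) simp

lemma mu_sum:
  fixes f :: "'s::finite \<Rightarrow> 'a::finite \<Rightarrow> 's \<Rightarrow> real"
  assumes fd: "\<And>s a. (\<Sum>s'\<in>UNIV. f s a s') = 1" and nu: "(\<Sum>s\<in>UNIV. \<nu>1 s) = 1" and pol: "\<pi> \<in> policies H"
    and k: "1 \<le> k" "k \<le> Suc H"
  shows "(\<Sum>s\<in>UNIV. mu f \<nu>1 \<pi> k s) = 1"
proof -
  have "(\<Sum>s\<in>UNIV. mu f \<nu>1 \<pi> k s) = (\<Sum>s0\<in>UNIV. \<nu>1 s0 * (\<Sum>s\<in>UNIV. sdist f \<pi> s0 k s))"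
    unfolding mu_def sum_distrib_left by (rule sum.swap)
  also have "\<dots> = 1" using sdist_sum[OF fd pol k] nu by simp
  finally show ?thesis .
qed

lemma occ_mu: "occ f \<nu>1 \<pi> h s a = mu f \<nu>1 \<pi> h s * \<pi> h s a"
  unfolding occ_def occ_cond_def mu_def sum_distrib_right by (simp only: mult.assoc)

lemma G_bounds:
  fixes f :: "'s::finite \<Rightarrow> 'a::finite \<Rightarrow> 's \<Rightarrow> real"
  assumes fn: "\<And>s a s'. 0 \<le> f s a s'" and fd: "\<And>s a. (\<Sum>s'\<in>UNIV. f s a s') = 1"
    and pol: "\<pi> \<in> policies H" and rr: "\<And>s a s' a'. 0 \<le> r s a s' a' \<and> r s a s' a' \<le> 1"
    and k: "1 \<le> k" "k \<le> H"
  shows "0 \<le> Gfun f r H s1 \<pi> k s a \<and> Gfun f r H s1 \<pi> k s a \<le> real H"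
proof -
  have Q: "0 \<le> Qfun f r H \<pi> \<pi> k s a s' a' \<and> Qfun f r H \<pi> \<pi> k s a s' a' \<le> real H" for s' a'
  proof -
    have "0 \<le> QQ f r \<pi> \<pi> (H - k) k s a s' a' \<and> QQ f r \<pi> \<pi> (H - k) k s a s' a' \<le> real (H - k) + 1"
      by (rule QQ_bounds[OF fn fd pol pol rr]) (use k in simp)
    moreover have "real (H - k) + 1 \<le> real H" using k by simp
    ultimately show ?thesis unfolding Qfun_def by linarith
  qed
  have oc: "0 \<le> occ_cond f \<pi> k z s' a'" for z s' a' using oc_nonneg[OF fn pol k] .
  have "0 \<le> Gfun f r H s1 \<pi> k s a" unfolding Gfun_def using Q oc by (intro sum_nonneg mult_nonneg_nonneg) auto
  moreover have "Gfun f r H s1 \<pi> k s a \<le> (\<Sum>s'\<in>UNIV. \<Sum>a'\<in>UNIV. occ_cond f \<pi> k (s1 s) s' a' * real H)"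
    unfolding Gfun_def using Q oc by (intro sum_mono mult_left_mono) auto
  moreover have "(\<Sum>s'\<in>UNIV. \<Sum>a'\<in>UNIV. occ_cond f \<pi> k (s1 s) s' a' * real H) = real H"
  proof -
    have "(\<Sum>s'\<in>UNIV. \<Sum>a'\<in>UNIV. occ_cond f \<pi> k (s1 s) s' a') = 1" by (rule oc_sum[OF fd pol k])
    then show ?thesis by (simp add: sum_distrib_right[symmetric])
  qed
  ultimately show ?thesis by simp
qed

lemma val_nonneg:
  fixes f :: "'s::finite \<Rightarrow> 'a::finite \<Rightarrow> 's \<Rightarrow> real"
  assumes fn: "\<And>s a s'. 0 \<le> f s a s'" and nun: "\<And>s. 0 \<le> \<nu>1 s"
    and pol: "\<pi> \<in> policies H" "\<sigma> \<in> policies H" and rr: "\<And>s a s' a'. 0 \<le> r s a s' a' \<and> r s a s' a' \<le> 1"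
    and H: "1 \<le> H"
  shows "0 \<le> val f r \<nu>1 H \<sigma> \<pi>"
  unfolding val_R[OF H] WS_def
  using oc_nonneg[OF fn pol(1)] oc_nonneg[OF fn pol(2)] nun rr
  by (intro sum_nonneg mult_nonneg_nonneg) auto

definition Fv where
  "Fv f r H s1 \<sigma> Om = (\<Sum>j=1..H. \<Sum>s\<in>UNIV. \<Sum>a\<in>UNIV. \<Sum>s'\<in>UNIV. \<Sum>a'\<in>UNIV.
            occ_cond f \<sigma> j (s1 s') s a * Om j s' a' * r s a s' a')"

lemma Fv_add: "Fv f r H s1 \<sigma> (\<lambda>j s a. O1 j s a + O2 j s a) = Fv f r H s1 \<sigma> O1 + Fv f r H s1 \<sigma> O2"
  unfolding Fv_def by (simp add: distrib_left distrib_right sum.distrib)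

lemma Fv_scale: "Fv f r H s1 \<sigma> (\<lambda>j s a. c * Om j s a) = c * Fv f r H s1 \<sigma> Om"
  unfolding Fv_def by (simp add: sum_distrib_left mult_ac)

lemma Fv_zero: "Fv f r H s1 \<sigma> (\<lambda>j s a. 0) = 0"
  unfolding Fv_def by simp

lemma Fv_sum: "finite A \<Longrightarrow> Fv f r H s1 \<sigma> (\<lambda>j s a. \<Sum>t\<in>A. Om t j s a) = (\<Sum>t\<in>A. Fv f r H s1 \<sigma> (Om t))"
proof (induction A rule: finite_induct)
  case empty
  then show ?case using Fv_zero by simp
next
  case (insert x F)
  then show ?case using Fv_add[of f r H s1 \<sigma> "Om x" "\<lambda>j s a. \<Sum>t\<in>F. Om t j s a"] by simp
qed

lemma Fv_cong: "(\<And>j s a. 1 \<le> j \<Longrightarrow> j \<le> H \<Longrightarrow> O1 j s a = O2 j s a) \<Longrightarrow> Fv f r H s1 \<sigma> O1 = Fv f r H s1 \<sigma> O2"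
  unfolding Fv_def by (intro sum.cong refl) auto

lemma bar_exists:
  fixes f :: "'s::finite \<Rightarrow> 'a::finite \<Rightarrow> 's \<Rightarrow> real" and \<nu>1 :: "'s \<Rightarrow> real"
    and \<pi>s :: "nat \<Rightarrow> ('s,'a) policy" and H T :: nat
  assumes fn: "\<And>s a s'. 0 \<le> f s a s'" and fd: "\<And>s a. (\<Sum>s'\<in>UNIV. f s a s') = 1"
    and nun: "\<And>s. 0 \<le> \<nu>1 s" and T: "1 \<le> T"
    and pols: "\<forall>t\<in>{1..T}. \<pi>s t \<in> policies H"
  shows "\<exists>\<pi>b\<in>policies H. \<forall>h\<in>{1..H}. \<forall>s a. occ f \<nu>1 \<pi>b h s a = (1 / real T) * (\<Sum>t=1..T. occ f \<nu>1 (\<pi>s t) h s a)"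
proof -
  define D where "D h s a = (1 / real T) * (\<Sum>t=1..T. occ f \<nu>1 (\<pi>s t) h s a)" for h s a
  define Ds where "Ds h s = (\<Sum>a\<in>UNIV. D h s a)" for h s
  define \<pi>b :: "('s,'a) policy" where "\<pi>b h s a = (if Ds h s > 0 then D h s a / Ds h s else 1 / real (card (UNIV :: 'a set)))" for h s a
  have Dnn: "0 \<le> D h s a" if "1 \<le> h" "h \<le> H" for h s a
  proof -
    have "0 \<le> occ f \<nu>1 (\<pi>s t) h s a" if "t \<in> {1..T}" for t
    proof -
      have p: "\<pi>s t \<in> policies H" using pols that by auto
      have "0 \<le> mu f \<nu>1 (\<pi>s t) h s" by (rule mu_nonneg[OF fn nun p]) (use \<open>h \<le> H\<close> in simp)
      moreover have "0 \<le> \<pi>s t h s a" by (rule pol_nonneg[OF p \<open>1 \<le> h\<close> \<open>h \<le> H\<close>])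
      ultimately show ?thesis unfolding occ_mu by simp
    qed
    then show ?thesis unfolding D_def by (intro mult_nonneg_nonneg sum_nonneg) auto
  qed
  have DsD: "Ds h s * \<pi>b h s a = D h s a" if "1 \<le> h" "h \<le> H" for h s a
  proof (cases "Ds h s > 0")
    case True
    then show ?thesis by (simp add: \<pi>b_def)
  next
    case False
    have "Ds h s \<ge> 0" unfolding Ds_def using Dnn[OF that] by (intro sum_nonneg) auto
    then have "Ds h s = 0" using False by simp
    then have "D h s a = 0" unfolding Ds_def using Dnn[OF that] sum_nonneg_eq_0_iff[of UNIV "D h s"] by simp
    then show ?thesis using \<open>Ds h s = 0\<close> by simp
  qed
  have pb: "\<pi>b \<in> policies H"
    unfolding policies_def is_dist_def
  proof (intro CollectI ballI allI conjI)
    fix h s a assume "h \<in> {1..H}"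
    then have h: "1 \<le> h" "h \<le> H" by auto
    show "0 \<le> \<pi>b h s a" unfolding \<pi>b_def using Dnn[OF h] by simp
    show "sum (\<pi>b h s) UNIV = 1"
    proof (cases "Ds h s > 0")
      case True
      then show ?thesis unfolding \<pi>b_def by (simp add: sum_divide_distrib[symmetric] Ds_def)
    next
      case False
      then show ?thesis unfolding \<pi>b_def by simp
    qed
  qed
  have Ds_mu: "Ds h s = (1 / real T) * (\<Sum>t=1..T. mu f \<nu>1 (\<pi>s t) h s)" if "1 \<le> h" "h \<le> H" for h s
  proof -
    have "Ds h s = (1 / real T) * (\<Sum>t=1..T. \<Sum>a\<in>UNIV. occ f \<nu>1 (\<pi>s t) h s a)"
      unfolding Ds_def D_def sum_distrib_left[symmetric] by (subst sum.swap) (rule refl)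
    also have "\<dots> = (1 / real T) * (\<Sum>t=1..T. mu f \<nu>1 (\<pi>s t) h s)"
    proof -
      have "(\<Sum>a\<in>UNIV. occ f \<nu>1 (\<pi>s t) h s a) = mu f \<nu>1 (\<pi>s t) h s" if "t \<in> {1..T}" for t
      proof -
        have p: "\<pi>s t \<in> policies H" using pols that by auto
        show ?thesis unfolding occ_mu sum_distrib_left[symmetric] pol_sum[OF p \<open>1 \<le> h\<close> \<open>h \<le> H\<close>] by simp
      qed
      then show ?thesis by simp
    qed
    finally show ?thesis .
  qed
  have mub: "mu f \<nu>1 \<pi>b h s = Ds h s" if "1 \<le> h" "h \<le> H" for h s
    using that
  proof (induction h arbitrary: s rule: nat_induct_at_least)
    case base
    have "Ds 1 s = (1 / real T) * (\<Sum>t=1..T. \<nu>1 s)" using Ds_mu[of 1 s] base by (simp add: mu_1)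
    also have "\<dots> = \<nu>1 s" using T by simp
    finally show ?case by (simp add: mu_1)
  next
    case (Suc h)
    obtain m where m: "h = Suc m" using Suc by (cases h) auto
    have "mu f \<nu>1 \<pi>b (Suc h) s = (\<Sum>x\<in>UNIV. \<Sum>a\<in>UNIV. mu f \<nu>1 \<pi>b h x * \<pi>b h x a * f x a s)"
      unfolding m by (rule mu_rec)
    also have "\<dots> = (\<Sum>x\<in>UNIV. \<Sum>a\<in>UNIV. D h x a * f x a s)"
      using Suc DsD by simp
    also have "\<dots> = (\<Sum>x\<in>UNIV. \<Sum>a\<in>UNIV. \<Sum>t=1..T. (1 / real T) * (mu f \<nu>1 (\<pi>s t) h x * \<pi>s t h x a * f x a s))"
      unfolding D_def occ_mu by (simp add: sum_distrib_left sum_distrib_right mult_ac)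
    also have "\<dots> = (\<Sum>t=1..T. \<Sum>x\<in>UNIV. \<Sum>a\<in>UNIV. (1 / real T) * (mu f \<nu>1 (\<pi>s t) h x * \<pi>s t h x a * f x a s))"
    proof -
      have "(\<Sum>x\<in>UNIV. \<Sum>a\<in>UNIV. \<Sum>t=1..T. g x a t) = (\<Sum>t=1..T. \<Sum>x\<in>UNIV. \<Sum>a\<in>UNIV. g x a t)" for g :: "'s \<Rightarrow> 'a \<Rightarrow> nat \<Rightarrow> real"
      proof -
        have "(\<Sum>x\<in>UNIV. \<Sum>a\<in>UNIV. \<Sum>t=1..T. g x a t) = (\<Sum>x\<in>UNIV. \<Sum>t=1..T. \<Sum>a\<in>UNIV. g x a t)"
          by (rule sum.cong[OF refl], rule sum.swap)
        also have "\<dots> = (\<Sum>t=1..T. \<Sum>x\<in>UNIV. \<Sum>a\<in>UNIV. g x a t)" by (rule sum.swap)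
        finally show ?thesis .
      qed
      then show ?thesis .
    qed
    also have "\<dots> = (1 / real T) * (\<Sum>t=1..T. mu f \<nu>1 (\<pi>s t) (Suc h) s)"
      unfolding m mu_rec sum_distrib_left ..
    also have "\<dots> = Ds (Suc h) s" using Ds_mu[of "Suc h" s] Suc by simp
    finally show ?case .
  qed
  have "occ f \<nu>1 \<pi>b h s a = D h s a" if "1 \<le> h" "h \<le> H" for h s a
    unfolding occ_mu mub[OF that] using DsD[OF that] .
  then show ?thesis using pb unfolding D_def by (intro bexI[of _ \<pi>b]) auto
qed

lemma mpo_seq:
  fixes f :: "'s::finite \<Rightarrow> 'a::finite \<Rightarrow> 's \<Rightarrow> real" and \<pi>s :: "nat \<Rightarrow> ('s,'a) policy"
  assumes pi1_pol: "\<pi>s 1 \<in> policies H" and pi1_low: "\<forall>h\<in>{1..H}. \<forall>s a. \<pi>s 1 h s a \<ge> \<pi>low"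
    and pilow_pos: "\<pi>low > 0"
    and step: "\<forall>t\<in>{1..T}. \<pi>s (Suc t) = mpo_update f r H s1 \<beta> (\<pi>s t)"
  shows "1 \<le> t \<Longrightarrow> t \<le> Suc T \<Longrightarrow> \<pi>s t \<in> policies H \<and> (\<forall>h\<in>{1..H}. \<forall>s a. \<pi>s t h s a > 0)"
proof (induction t rule: nat_induct_at_least)
  case base
  then show ?case using pi1_pol pi1_low pilow_pos by (auto intro: less_le_trans)
next
  case (Suc t)
  then have IH: "\<pi>s t \<in> policies H" "\<forall>h\<in>{1..H}. \<forall>s a. \<pi>s t h s a > 0" by auto
  have st: "\<pi>s (Suc t) = mpo_update f r H s1 \<beta> (\<pi>s t)" using step Suc by auto
  have d: "(\<forall>a. \<pi>s (Suc t) h s a > 0) \<and> (\<Sum>a\<in>UNIV. \<pi>s (Suc t) h s a) = 1" if h: "h \<in> {1..H}" for h s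
  proof (rule upd_dist[where w = "\<lambda>a. \<beta> * Gfun f r H s1 (\<pi>s t) h s a"])
    show "\<forall>a. 0 < \<pi>s t h s a" using IH h by auto
    show "(\<Sum>a\<in>UNIV. \<pi>s t h s a) = 1" using pol_sum[OF IH(1)] h by auto
    show "\<forall>a. \<pi>s (Suc t) h s a = \<pi>s t h s a * exp (\<beta> * Gfun f r H s1 (\<pi>s t) h s a) / (\<Sum>b\<in>UNIV. \<pi>s t h s b * exp (\<beta> * Gfun f r H s1 (\<pi>s t) h s b))"
      unfolding st mpo_update_def Let_def Gfun_def by simp
  qed
  have "\<pi>s (Suc t) \<in> policies H" unfolding policies_def is_dist_def using d by (auto intro: less_imp_le)
  then show ?case using d by auto
qed

lemma regret:
  fixes f :: "'s::finite \<Rightarrow> 'a::finite \<Rightarrow> 's \<Rightarrow> real" and \<pi>s :: "nat \<Rightarrow> ('s,'a) policy"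
    and \<sigma> :: "('s,'a) policy"
  assumes fn: "\<And>s a s'. 0 \<le> f s a s'" and fd: "\<And>s a. (\<Sum>s'\<in>UNIV. f s a s') = 1"
    and rr: "\<And>s a s' a'. 0 \<le> r s a s' a' \<and> r s a s' a' \<le> 1"
    and pi1_pol: "\<pi>s 1 \<in> policies H" and pi1_low: "\<forall>h\<in>{1..H}. \<forall>s a. \<pi>s 1 h s a \<ge> \<pi>low"
    and pilow_pos: "\<pi>low > 0"
    and step: "\<forall>t\<in>{1..T}. \<pi>s (Suc t) = mpo_update f r H s1 \<beta> (\<pi>s t)"
    and pols: "\<forall>t\<in>{1..T}. \<pi>s t \<in> policies H"
    and sig: "\<sigma> \<in> policies H"
    and beta: "\<beta> > 0" "\<beta> * real H \<le> 1"
    and k: "1 \<le> k" "k \<le> H"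
  shows "(\<Sum>t=1..T. \<Sum>a\<in>UNIV. (\<sigma> k s a - \<pi>s t k s a) * Gfun f r H s1 (\<pi>s t) k s a)
     \<le> ln (1 / \<pi>low) / \<beta> + \<beta> * real T * (real H)\<^sup>2"
proof -
  define B where "B = ln (1 / \<pi>low) / \<beta> + \<beta> * real T * (real H)\<^sup>2"
  define p where "p t = \<pi>s t k s" for t
  define g where "g t a = Gfun f r H s1 (\<pi>s t) k s a" for t a
  have hb: "(\<Sum>t=1..T. g t a0 - (\<Sum>b\<in>UNIV. p t b * g t b)) \<le> B" for a0
    unfolding B_def
  proof (rule hedge)
    show "\<forall>a. \<pi>low \<le> p 1 a" using pi1_low k by (simp add: p_def)
    show "\<pi>low > 0" by (rule pilow_pos)
    show "(\<Sum>a\<in>UNIV. p 1 a) = 1" unfolding p_def using pol_sum[OF pi1_pol k] .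
    show "\<forall>t\<in>{1..T}. \<forall>a. p (Suc t) a = p t a * exp (\<beta> * g t a) / (\<Sum>b\<in>UNIV. p t b * exp (\<beta> * g t b))"
      using step unfolding p_def g_def mpo_update_def Let_def Gfun_def by simp
    show "\<forall>t\<in>{1..T}. \<forall>a. 0 \<le> g t a \<and> g t a \<le> real H"
    proof (intro ballI allI)
      fix t a assume "t \<in> {1..T}"
      then have pt: "\<pi>s t \<in> policies H" using pols by auto
      show "0 \<le> g t a \<and> g t a \<le> real H" unfolding g_def
        by (rule G_bounds) (use fn fd rr k pt in auto)
    qed
    show "\<beta> > 0" "\<beta> * real H \<le> 1" by (rule beta(1), rule beta(2))
  qed
  have ss: "(\<Sum>a\<in>UNIV. \<sigma> k s a) = 1" using pol_sum[OF sig k] .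
  have s0: "0 \<le> \<sigma> k s a" for a using pol_nonneg[OF sig k] .
  have "(\<Sum>t=1..T. \<Sum>a\<in>UNIV. (\<sigma> k s a - \<pi>s t k s a) * Gfun f r H s1 (\<pi>s t) k s a)
      = (\<Sum>t=1..T. \<Sum>a\<in>UNIV. \<sigma> k s a * (g t a - (\<Sum>b\<in>UNIV. p t b * g t b)))"
  proof (rule sum.cong[OF refl])
    fix t
    have "(\<Sum>a\<in>UNIV. \<sigma> k s a * (g t a - (\<Sum>b\<in>UNIV. p t b * g t b)))
        = (\<Sum>a\<in>UNIV. \<sigma> k s a * g t a) - (\<Sum>a\<in>UNIV. \<sigma> k s a) * (\<Sum>b\<in>UNIV. p t b * g t b)"
      by (simp add: right_diff_distrib sum_subtractf sum_distrib_right)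
    also have "\<dots> = (\<Sum>a\<in>UNIV. (\<sigma> k s a - \<pi>s t k s a) * Gfun f r H s1 (\<pi>s t) k s a)"
      unfolding ss by (simp add: p_def g_def left_diff_distrib sum_subtractf)
    finally show "(\<Sum>a\<in>UNIV. (\<sigma> k s a - \<pi>s t k s a) * Gfun f r H s1 (\<pi>s t) k s a) = (\<Sum>a\<in>UNIV. \<sigma> k s a * (g t a - (\<Sum>b\<in>UNIV. p t b * g t b)))"
      by simp
  qed
  also have "\<dots> = (\<Sum>a\<in>UNIV. \<sigma> k s a * (\<Sum>t=1..T. g t a - (\<Sum>b\<in>UNIV. p t b * g t b)))"
    by (subst sum.swap) (simp add: sum_distrib_left)
  also have "\<dots> \<le> (\<Sum>a\<in>UNIV. \<sigma> k s a * B)"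
    using hb s0 by (intro sum_mono mult_left_mono) auto
  also have "\<dots> = B" using ss by (simp add: sum_distrib_right[symmetric])
  finally show ?thesis unfolding B_def .
qed

theorem theorem5:
  fixes f :: "'s::finite \<Rightarrow> 'a::finite \<Rightarrow> 's \<Rightarrow> real"
    and \<nu>1 :: "'s \<Rightarrow> real"
    and r :: "'s \<Rightarrow> 'a \<Rightarrow> 's \<Rightarrow> 'a \<Rightarrow> real"
    and H T :: nat
    and s1 :: "'s \<Rightarrow> 's"
    and \<pi>1 :: "('s, 'a) policy"
    and \<pi>s :: "nat \<Rightarrow> ('s, 'a) policy"
    and \<pi>low \<epsilon> \<beta> :: real
  assumes H: "H \<ge> 1"
    and trans: "\<forall>s a. is_dist (f s a)"
    and init: "is_dist \<nu>1"
    and r_range: "\<forall>s a s' a'. 0 \<le> r s a s' a' \<and> r s a s' a' \<le> 1"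
    and r_anti: "\<forall>s a s' a'. r s a s' a' = 1 - r s' a' s a"
    and reach_ex: "\<forall>s. \<exists>s0. \<exists>h\<in>{1..H}. \<nu>1 s0 > 0 \<and> s \<in> reach f s0 h"
    and reach_uniq: "\<forall>s0 s. \<forall>h\<in>{1..H}. \<nu>1 s0 > 0 \<longrightarrow> s \<in> reach f s0 h \<longrightarrow> s1 s = s0"
    and pi1_pol: "\<pi>1 \<in> policies H"
    and pilow_pos: "\<pi>low > 0"
    and pi1_low: "\<forall>h\<in>{1..H}. \<forall>s a. \<pi>1 h s a \<ge> \<pi>low"
    and eps: "\<epsilon> > 0"
    and T_ge: "T \<ge> 1"
    and T_def: "real T = 16 * real H ^ 4 * ln (1 / \<pi>low) / \<epsilon> ^ 2"
    and beta_def: "\<beta> = sqrt (ln (1 / \<pi>low) / (real T * real H ^ 2))"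
    and start: "\<pi>s 1 = \<pi>1"
    and step: "\<forall>t\<in>{1..T}. \<pi>s (Suc t) = mpo_update f r H s1 \<beta> (\<pi>s t)"
  shows "\<exists>\<pi>bar \<in> policies H.
           (\<forall>h\<in>{1..H}. \<forall>s a. occ f \<nu>1 \<pi>bar h s a = (1 / real T) * (\<Sum>t=1..T. occ f \<nu>1 (\<pi>s t) h s a))
           \<and> approx_NE f r \<nu>1 H \<epsilon> \<pi>bar"
proof -
  have fn: "\<And>s a s'. 0 \<le> f s a s'" using trans by (simp add: is_dist_def)
  have fd: "\<And>s a. (\<Sum>s'\<in>UNIV. f s a s') = 1" using trans by (simp add: is_dist_def)
  have nun: "\<And>s. 0 \<le> \<nu>1 s" using init by (simp add: is_dist_def)
  have nus: "(\<Sum>s\<in>UNIV. \<nu>1 s) = 1" using init by (simp add: is_dist_def)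
  have rr: "\<And>s a s' a'. 0 \<le> r s a s' a' \<and> r s a s' a' \<le> 1" using r_range by blast
  have anti: "\<And>s a s' a'. r s a s' a' = 1 - r s' a' s a" using r_anti by blast
  have pi1: "\<pi>s 1 \<in> policies H" using pi1_pol start by simp
  have pi1l: "\<forall>h\<in>{1..H}. \<forall>s a. \<pi>s 1 h s a \<ge> \<pi>low" using pi1_low start by simp
  have seq: "\<pi>s t \<in> policies H" if "t \<in> {1..T}" for t
    using mpo_seq[OF pi1 pi1l pilow_pos step, of t] that by auto
  note basics = fn fd nun nus rr anti H reach_uniq T_ge
  have pols: "\<forall>t\<in>{1..T}. \<pi>s t \<in> policies H" using seq by blast
  have "\<exists>\<pi>b\<in>policies H. \<forall>h\<in>{1..H}. \<forall>s a. occ f \<nu>1 \<pi>b h s a = (1 / real T) * (\<Sum>t=1..T. occ f \<nu>1 (\<pi>s t) h s a)"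
    by (rule bar_exists; (rule basics pols)?)
  then obtain \<pi>b where pb: "\<pi>b \<in> policies H"
    and occb: "\<forall>h\<in>{1..H}. \<forall>s a. occ f \<nu>1 \<pi>b h s a = (1 / real T) * (\<Sum>t=1..T. occ f \<nu>1 (\<pi>s t) h s a)"
    by blast
  have vhalf: "val f r \<nu>1 H \<pi> \<pi> = real H / 2" if "\<pi> \<in> policies H" for \<pi>
  proof -
    have "val f r \<nu>1 H \<pi> \<pi> + val f r \<nu>1 H \<pi> \<pi> = real H"
      by (rule val_anti; (rule basics that)?)
    then show ?thesis by simp
  qed
  have vsw: "val f r \<nu>1 H \<pi> \<sigma> = real H - val f r \<nu>1 H \<sigma> \<pi>" if "\<pi> \<in> policies H" "\<sigma> \<in> policies H" for \<pi> \<sigma>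
  proof -
    have "val f r \<nu>1 H \<sigma> \<pi> + val f r \<nu>1 H \<pi> \<sigma> = real H"
      by (rule val_anti; (rule basics that)?)
    then show ?thesis by simp
  qed
  define L where "L = ln (1 / \<pi>low)"
  have TH: "real T = 16 * real H ^ 4 * L / \<epsilon> ^ 2" using T_def L_def by simp
  have Hpos: "real H > 0" using H by simp
  have Lpos: "L > 0"
  proof (rule ccontr)
    assume "\<not> L > 0"
    then have "16 * real H ^ 4 * L / \<epsilon> ^ 2 \<le> 0"
      by (intro divide_nonpos_pos mult_nonneg_nonpos) (use eps in auto)
    then show False using TH T_ge by simp
  qed
  have Tpos: "real T > 0" using T_ge by simp
  have bpos: "\<beta> > 0" unfolding beta_def L_def[symmetric] using Lpos Tpos Hpos by simp
  have b2: "\<beta>\<^sup>2 * (real T * (real H)\<^sup>2) = L"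
  proof -
    have "\<beta>\<^sup>2 = L / (real T * real H ^ 2)" unfolding beta_def L_def[symmetric]
      using Lpos Tpos Hpos by (simp add: real_sqrt_pow2)
    then show ?thesis using Tpos Hpos by (simp add: field_simps)
  qed
  have b3: "\<beta> * (4 * real H ^ 3) = \<epsilon>"
  proof -
    have h6: "real H ^ 4 * (real H)\<^sup>2 = real H ^ 6" by (simp flip: power_add)
    have e1: "real T * (real H)\<^sup>2 = 16 * real H ^ 6 * L / \<epsilon>\<^sup>2"
      unfolding TH h6[symmetric] by (simp add: field_simps)
    have "\<beta>\<^sup>2 * (16 * real H ^ 6 * L / \<epsilon>\<^sup>2) = L"
      using b2 unfolding e1 .
    then have "\<beta>\<^sup>2 * (16 * real H ^ 6) = \<epsilon>\<^sup>2" using Lpos eps by (simp add: field_simps)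
    then have "(\<beta> * (4 * real H ^ 3))\<^sup>2 = \<epsilon>\<^sup>2" by (simp add: power_mult_distrib power2_eq_square field_simps)
    then show ?thesis using bpos Hpos eps by (simp add: power2_eq_iff_nonneg)
  qed
  have K: "val f r \<nu>1 H \<sigma> \<pi>b \<le> real H / 2 + \<epsilon>" if sig: "\<sigma> \<in> policies H" for \<sigma>
  proof (cases "\<epsilon> \<ge> real H / 2")
    case True
    have "0 \<le> val f r \<nu>1 H \<pi>b \<sigma>" by (rule val_nonneg; (rule basics sig pb)?)
    then show ?thesis using vsw[OF pb sig] True by simp
  next
    case False
    have bH: "\<beta> * real H \<le> 1"
    proof -
      have "\<beta> * (4 * real H ^ 3) < real H / 2" using b3 False by simp
      then have "(\<beta> * (8 * (real H)\<^sup>2)) * real H < 1 * real H"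
        by (simp add: power2_eq_square power3_eq_cube field_simps)
      then have c1: "\<beta> * (8 * (real H)\<^sup>2) < 1" using Hpos by (simp only: mult_less_cancel_right_pos)
      have "real H \<le> 8 * (real H)\<^sup>2" using H by (simp add: power2_eq_square)
      then have "\<beta> * real H \<le> \<beta> * (8 * (real H)\<^sup>2)" using bpos by (intro mult_left_mono) auto
      then show ?thesis using c1 by linarith
    qed
    define B where "B = ln (1 / \<pi>low) / \<beta> + \<beta> * real T * (real H)\<^sup>2"
    have RB: "(\<Sum>t=1..T. \<Sum>a\<in>UNIV. (\<sigma> k s a - \<pi>s t k s a) * Gfun f r H s1 (\<pi>s t) k s a) \<le> B"
      if "k \<in> {1..H}" for k s
      unfolding B_def
      by (rule regret; (rule basics pi1 pi1l pilow_pos step pols sig bpos bH)?) (use that in auto)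
    have pdlt: "val f r \<nu>1 H \<sigma> (\<pi>s t) - real H / 2
        = (\<Sum>k=1..H. \<Sum>s\<in>UNIV. mu f \<nu>1 \<sigma> k s * (\<Sum>a\<in>UNIV. (\<sigma> k s a - \<pi>s t k s a) * Gfun f r H s1 (\<pi>s t) k s a))"
      if "t \<in> {1..T}" for t
    proof -
      have "val f r \<nu>1 H \<sigma> (\<pi>s t) - val f r \<nu>1 H (\<pi>s t) (\<pi>s t)
        = (\<Sum>k=1..H. \<Sum>s\<in>UNIV. mu f \<nu>1 \<sigma> k s * (\<Sum>a\<in>UNIV. (\<sigma> k s a - \<pi>s t k s a) * Gfun f r H s1 (\<pi>s t) k s a))"
        by (rule pdl; (rule basics)?)
      then show ?thesis using vhalf[OF seq[OF that]] by simp
    qed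
    have "(\<Sum>t=1..T. val f r \<nu>1 H \<sigma> (\<pi>s t) - real H / 2)
        = (\<Sum>t=1..T. \<Sum>k=1..H. \<Sum>s\<in>UNIV. mu f \<nu>1 \<sigma> k s * (\<Sum>a\<in>UNIV. (\<sigma> k s a - \<pi>s t k s a) * Gfun f r H s1 (\<pi>s t) k s a))"
      using pdlt by (intro sum.cong refl) auto
    also have "\<dots> = (\<Sum>k=1..H. \<Sum>t=1..T. \<Sum>s\<in>UNIV. mu f \<nu>1 \<sigma> k s * (\<Sum>a\<in>UNIV. (\<sigma> k s a - \<pi>s t k s a) * Gfun f r H s1 (\<pi>s t) k s a))"
      by (rule sum.swap)
    also have "\<dots> = (\<Sum>k=1..H. \<Sum>s\<in>UNIV. mu f \<nu>1 \<sigma> k s * (\<Sum>t=1..T. \<Sum>a\<in>UNIV. (\<sigma> k s a - \<pi>s t k s a) * Gfun f r H s1 (\<pi>s t) k s a))"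
      by (intro sum.cong refl) (simp only: sum_distrib_left, rule sum.swap)
    also have "\<dots> \<le> (\<Sum>k=1..H. \<Sum>s\<in>UNIV. mu f \<nu>1 \<sigma> k s * B)"
    proof (intro sum_mono mult_left_mono)
      fix k s assume "k \<in> {1..H}"
      then show "(\<Sum>t=1..T. \<Sum>a\<in>UNIV. (\<sigma> k s a - \<pi>s t k s a) * Gfun f r H s1 (\<pi>s t) k s a) \<le> B"
        using RB by blast
      show "0 \<le> mu f \<nu>1 \<sigma> k s" by (rule mu_nonneg[of f \<nu>1 \<sigma> H]; (rule basics sig)?) (use \<open>k \<in> {1..H}\<close> in auto)
    qed
    also have "\<dots> = (\<Sum>k=1..H. B)"
    proof (intro sum.cong refl)
      fix k assume "k \<in> {1..H}"
      then have "(\<Sum>s\<in>UNIV. mu f \<nu>1 \<sigma> k s) = 1" by - (rule mu_sum[of f \<nu>1 \<sigma> H]; (rule basics sig)?; auto)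
      then show "(\<Sum>s\<in>UNIV. mu f \<nu>1 \<sigma> k s * B) = B" by (simp add: sum_distrib_right[symmetric])
    qed
    also have "\<dots> = real H * B" by simp
    finally have S: "(\<Sum>t=1..T. val f r \<nu>1 H \<sigma> (\<pi>s t) - real H / 2) \<le> real H * B" .
    have vb: "val f r \<nu>1 H \<sigma> \<pi>b = (1 / real T) * (\<Sum>t=1..T. val f r \<nu>1 H \<sigma> (\<pi>s t))"
    proof -
      have vo: "val f r \<nu>1 H \<sigma> \<pi> = Fv f r H s1 \<sigma> (occ f \<nu>1 \<pi>)" for \<pi>
        unfolding Fv_def by (rule val_occ; (rule basics)?)
      have "val f r \<nu>1 H \<sigma> \<pi>b = Fv f r H s1 \<sigma> (occ f \<nu>1 \<pi>b)" by (rule vo)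
      also have "\<dots> = Fv f r H s1 \<sigma> (\<lambda>j s a. (1 / real T) * (\<Sum>t\<in>{1..T}. occ f \<nu>1 (\<pi>s t) j s a))"
        using occb by (intro Fv_cong) auto
      also have "\<dots> = (1 / real T) * (\<Sum>t\<in>{1..T}. Fv f r H s1 \<sigma> (occ f \<nu>1 (\<pi>s t)))"
        by (simp only: Fv_scale Fv_sum[OF finite_atLeastAtMost])
      also have "\<dots> = (1 / real T) * (\<Sum>t=1..T. val f r \<nu>1 H \<sigma> (\<pi>s t))"
        unfolding vo ..
      finally show ?thesis .
    qed
    have "val f r \<nu>1 H \<sigma> \<pi>b - real H / 2 = (1 / real T) * (\<Sum>t=1..T. val f r \<nu>1 H \<sigma> (\<pi>s t) - real H / 2)"
    proof -
      have s1: "(\<Sum>t=1..T. val f r \<nu>1 H \<sigma> (\<pi>s t) - real H / 2) = (\<Sum>t=1..T. val f r \<nu>1 H \<sigma> (\<pi>s t)) - real T * (real H / 2)"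
        by (simp add: sum_subtractf)
      show ?thesis unfolding vb s1 using Tpos by (simp add: right_diff_distrib)
    qed
    also have "\<dots> \<le> (1 / real T) * (real H * B)"
      using S Tpos by (intro mult_left_mono) auto
    also have "(1 / real T) * (real H * B) = \<epsilon> / 2"
    proof -
      have "ln (1 / \<pi>low) / \<beta> = \<beta> * real T * (real H)\<^sup>2"
        using b2 bpos unfolding L_def by (simp add: field_simps power2_eq_square)
      then have "B = 2 * \<beta> * real T * (real H)\<^sup>2" unfolding B_def by simp
      then have "(1 / real T) * (real H * B) = 2 * \<beta> * real H ^ 3"
        using Tpos by (simp add: field_simps power2_eq_square power3_eq_cube)
      then show ?thesis using b3 by simp
    qed
    finally show ?thesis using eps by simp
  qed
  have ne: "policies H \<noteq> ({} :: ('s,'a) policy set)" using pb by blast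
  have inf: "real H / 2 - \<epsilon> \<le> (INF \<sigma>\<in>policies H. val f r \<nu>1 H \<pi>b \<sigma>)"
  proof (rule cINF_greatest[OF ne])
    fix \<sigma> :: "('s,'a) policy" assume s\<sigma>: "\<sigma> \<in> policies H"
    have "val f r \<nu>1 H \<pi>b \<sigma> = real H - val f r \<nu>1 H \<sigma> \<pi>b" by (rule vsw[OF pb s\<sigma>])
    moreover have "val f r \<nu>1 H \<sigma> \<pi>b \<le> real H / 2 + \<epsilon>" by (rule K[OF s\<sigma>])
    ultimately show "real H / 2 - \<epsilon> \<le> val f r \<nu>1 H \<pi>b \<sigma>" by linarith
  qed
  have sup: "(SUP \<sigma>\<in>policies H. val f r \<nu>1 H \<sigma> \<pi>b) \<le> real H / 2 + \<epsilon>"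
  proof (rule cSUP_least[OF ne])
    fix \<sigma> :: "('s,'a) policy" assume "\<sigma> \<in> policies H"
    then show "val f r \<nu>1 H \<sigma> \<pi>b \<le> real H / 2 + \<epsilon>" by (rule K)
  qed
  have vb2: "val f r \<nu>1 H \<pi>b \<pi>b = real H / 2" by (rule vhalf[OF pb])
  have NE: "approx_NE f r \<nu>1 H \<epsilon> \<pi>b"
    unfolding approx_NE_def vb2 using inf sup by linarith
  show ?thesis using pb occb NE by blast
qed


end
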